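(* Let $\triangle PQR$ be a triangle contained in $D$. Then there exists a triangle $\triangle P'Q'R'\subset D$ that is (Euclidean-)similar to $\triangle PQR$ such that for every triangle $\triangle ABC\subset D$ that is (Euclidean-)congruent to $\triangle P'Q'R'$, $\rho(\psi_{\triangle ABC})=\frac13$.
   Context: $D$ is the open unit disk in $\mathbb{R}^2$ and $S^1$ its boundary, identified with $\mathbb{R}/\mathbb{Z}$ via $t\mapsto(\cos2\pi t,\sin2\pi t)$. Triangles are non-degenerate closed Euclidean triangles. For a triangle $T\subset D$ and $v\in S^1$, there are exactly two chords $vv_1,vv_2$ of $S^1$ whose lines support $T$; with $v_1$ the one reached first moving counterclockwise from $v$, set $\psi_T(v):=v_1$ (a homeomorphism of $S^1$). $\rho(\psi_T)=\lim_{n\to\infty}\overline{\psi_T}^{\,n}(0)/n$ is its rotation number, where $\overline{\psi_T}$ is the lift to $\mathbb{R}$ with $\overline{\psi_T}(0)\in(0,1)$. *)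

theory Defs
  imports "HOL-Analysis.Analysis"
begin

text \<open>Points of the plane are vectors in real^2.  The circle S^1 is parametrised by
  R/Z via t maps to (cos 2 pi t, sin 2 pi t).\<close>

definition circ :: "real \<Rightarrow> real^2" where
  "circ t = vector [cos (2 * pi * t), sin (2 * pi * t)]"

definition is_triangle :: "(real^2) set \<Rightarrow> bool" where
  "is_triangle T \<longleftrightarrow> (\<exists>A B C. \<not> collinear {A, B, C} \<and> T = convex hull {A, B, C})"

definition in_disk :: "(real^2) set \<Rightarrow> bool" where
  "in_disk T \<longleftrightarrow> T \<subseteq> ball 0 1"

definition cross2 :: "real^2 \<Rightarrow> real^2 \<Rightarrow> real" where
  "cross2 u v = u$1 * v$2 - u$2 * v$1"

definition supports :: "(real^2) set \<Rightarrow> real^2 \<Rightarrow> real^2 \<Rightarrow> bool" where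
  "supports T p q \<longleftrightarrow> p \<noteq> q \<and> (\<exists>x\<in>T. cross2 (q - p) (x - p) = 0) \<and>
     ((\<forall>x\<in>T. cross2 (q - p) (x - p) \<ge> 0) \<or> (\<forall>x\<in>T. cross2 (q - p) (x - p) \<le> 0))"

text \<open>Counterclockwise offset (in (0,1)) from v = circ t to psi_T(v): the first endpoint,
  moving counterclockwise from v, of a chord from v whose line supports T.\<close>
definition psi_offset :: "(real^2) set \<Rightarrow> real \<Rightarrow> real" where
  "psi_offset T t = Inf {d. 0 < d \<and> d < 1 \<and> supports T (circ t) (circ (t + d))}"

definition psi_lift :: "(real^2) set \<Rightarrow> real \<Rightarrow> real" where
  "psi_lift T x = x + psi_offset T x"

definition similar :: "(real^2) set \<Rightarrow> (real^2) set \<Rightarrow> bool" where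
  "similar S T \<longleftrightarrow> (\<exists>f k. k > 0 \<and> (\<forall>x y. dist (f x) (f y) = k * dist x y) \<and> f ` S = T)"

definition congruent :: "(real^2) set \<Rightarrow> (real^2) set \<Rightarrow> bool" where
  "congruent S T \<longleftrightarrow> (\<exists>f. (\<forall>x y. dist (f x) (f y) = dist x y) \<and> f ` S = T)"

end

theory Submission
  imports Defs
begin

lemma inner2: "inner (x::real^2) y = x$1*y$1 + x$2*y$2"
  by (simp add: inner_vec_def sum_2)

lemma normsq2: "(norm (x::real^2))^2 = x$1^2 + x$2^2"
  by (subst power2_norm_eq_inner) (simp add: inner2 power2_eq_square)

lemma vec_eq2: "(x::real^2) = y \<longleftrightarrow> x$1 = y$1 \<and> x$2 = y$2"
  by (metis exhaust_2 vec_eq_iff)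

lemma circ1[simp]: "circ t $ 1 = cos (2*pi*t)" and circ2[simp]: "circ t $ 2 = sin (2*pi*t)"
  by (simp_all add: circ_def)

lemma norm_circ[simp]: "norm (circ t) = 1"
proof -
  have "(norm (circ t))^2 = 1" by (simp add: normsq2)
  then show ?thesis using norm_ge_zero[of "circ t"] power2_eq_1_iff[of "norm (circ t)"] by linarith
qed

lemma circ_periodic: "circ (t + 1) = circ t"
proof -
  have "cos (2*pi*(t+1)) = cos (2*pi*t)" "sin (2*pi*(t+1)) = sin (2*pi*t)"
    by (simp_all add: distrib_left)
  then show ?thesis by (simp add: vec_eq2)
qed

definition Y1 :: "real^2 \<Rightarrow> real \<Rightarrow> real" where
  "Y1 X t = X$1 * cos (2*pi*t) + X$2 * sin (2*pi*t)"
definition Y2 :: "real^2 \<Rightarrow> real \<Rightarrow> real" where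
  "Y2 X t = - X$1 * sin (2*pi*t) + X$2 * cos (2*pi*t)"

lemma rot_sq_aux: "(x * p + y * q)^2 + (- x * q + y * p)^2 = ((x::real)^2+y^2)*(q^2+p^2)"
  by algebra

lemma Y_normsq: "(Y1 X t)^2 + (Y2 X t)^2 = (norm X)^2"
proof -
  have "(Y1 X t)^2 + (Y2 X t)^2 = (X$1^2 + X$2^2) * ((sin (2*pi*t))^2 + (cos (2*pi*t))^2)"
    unfolding Y1_def Y2_def by (rule rot_sq_aux)
  then show ?thesis by (simp add: normsq2)
qed

lemma cross_formula:
  "cross2 (circ (t+d) - circ t) (X - circ t) =
     2 * sin (pi*d) * (cos (pi*d) * (1 - Y1 X t) - sin (pi*d) * Y2 X t)"
proof -
  define c where "c = cos (2*pi*t)"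
  define s where "s = sin (2*pi*t)"
  define a where "a = sin (pi*d)"
  define b where "b = cos (pi*d)"
  have cd: "cos (2*pi*d) = 1 - 2*a^2"
    using cos_double_sin[of "pi*d"] by (simp add: a_def mult.assoc)
  have sd: "sin (2*pi*d) = 2*a*b"
    using sin_double[of "pi*d"] by (simp add: a_def b_def mult.assoc)
  have e1: "cos (2*pi*(t+d)) = c*(1-2*a^2) - s*(2*a*b)"
    by (simp add: distrib_left cos_add c_def s_def cd sd)
  have e2: "sin (2*pi*(t+d)) = s*(1-2*a^2) + c*(2*a*b)"
    by (simp add: distrib_left sin_add c_def s_def cd sd)
  have cs: "c^2 + s^2 = 1" by (simp add: c_def s_def)
  have "cross2 (circ (t+d) - circ t) (X - circ t) =
    (c*(1-2*a^2) - s*(2*a*b) - c) * (X$2 - s) - (s*(1-2*a^2) + c*(2*a*b) - s) * (X$1 - c)"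
    unfolding cross2_def by (simp add: e1 e2 c_def s_def)
  also have "\<dots> = 2*a*(b*(c^2+s^2) - b*(c*X$1 + s*X$2) - a*(c*X$2 - s*X$1))"
    by (simp add: algebra_simps power2_eq_square)
  also have "\<dots> = 2 * a * (b * (1 - Y1 X t) - a * Y2 X t)"
    unfolding cs Y1_def Y2_def c_def[symmetric] s_def[symmetric] by (simp add: algebra_simps)
  finally show ?thesis by (simp add: a_def b_def)
qed

lemma rot_inv1: "p * (x * p + y * q) - q * (- x * q + y * p) = (x::real) * (q^2 + p^2)"
  by algebra
lemma rot_inv2: "q * (x * p + y * q) + p * (- x * q + y * p) = (y::real) * (q^2 + p^2)"
  by algebra

lemma Y1_lt1:
  assumes "norm X \<le> 1" "X \<noteq> circ t"
  shows "Y1 X t < 1"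
proof (rule ccontr)
  assume "\<not> Y1 X t < 1"
  have n: "(Y1 X t)^2 + (Y2 X t)^2 \<le> 1" using assms(1) Y_normsq[of X t]
    by (metis norm_ge_zero power_le_one)
  then have "(Y1 X t)^2 \<le> 1" by (smt (verit) zero_le_power2)
  then have "\<bar>Y1 X t\<bar> \<le> \<bar>1\<bar>" using abs_le_square_iff by (metis one_power2)
  then have "Y1 X t \<le> 1" by simp
  with \<open>\<not> Y1 X t < 1\<close> have y1: "Y1 X t = 1" by simp
  with n have "(Y2 X t)^2 \<le> 0" by simp
  then have y2: "Y2 X t = 0" by simp
  have "X$1 = cos (2*pi*t) * Y1 X t - sin (2*pi*t) * Y2 X t"
    unfolding Y1_def Y2_def using rot_inv1[where p="cos (2*pi*t)" and x="X$1" and q="sin (2*pi*t)" and y="X$2"] by simp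
  moreover have "X$2 = sin (2*pi*t) * Y1 X t + cos (2*pi*t) * Y2 X t"
    unfolding Y1_def Y2_def using rot_inv2[where p="cos (2*pi*t)" and x="X$1" and q="sin (2*pi*t)" and y="X$2"] by simp
  ultimately have "X = circ t" using y1 y2 by (simp add: vec_eq2)
  with assms show False by simp
qed

definition gg :: "real^2 \<Rightarrow> real \<Rightarrow> real" where
  "gg X t = 1/2 - arctan (Y2 X t / (1 - Y1 X t)) / pi"

lemma gg_bounds: "0 < gg X t" "gg X t < 1"
proof -
  have "-(pi/2) < arctan (Y2 X t / (1 - Y1 X t))" "arctan (Y2 X t / (1 - Y1 X t)) < pi/2"
    by (rule arctan_lbound, rule arctan_ubound)
  then show "0 < gg X t" "gg X t < 1" unfolding gg_def
    by (auto simp: field_simps)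
qed

lemma cross_cos:
  assumes "norm X \<le> 1" "X \<noteq> circ t"
  shows "cross2 (circ (t+d) - circ t) (X - circ t) =
     (2 * sin (pi*d) * (1 - Y1 X t) / cos (arctan (Y2 X t / (1 - Y1 X t)))) *
       cos (pi*d + arctan (Y2 X t / (1 - Y1 X t)))"
proof -
  define q where "q = Y2 X t / (1 - Y1 X t)"
  define \<beta> where "\<beta> = arctan q"
  have y: "1 - Y1 X t > 0" using Y1_lt1[OF assms] by simp
  have cb: "cos \<beta> > 0" unfolding \<beta>_def by (simp add: cos_arctan add_pos_nonneg)
  have y2: "Y2 X t = (1 - Y1 X t) * (sin \<beta> / cos \<beta>)"
    using y tan_arctan[of q] by (simp add: \<beta>_def q_def tan_def)
  have "cross2 (circ (t+d) - circ t) (X - circ t) =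
     2 * sin (pi*d) * (cos (pi*d) * (1 - Y1 X t) - sin (pi*d) * Y2 X t)"
    by (rule cross_formula)
  also have "\<dots> = (2 * sin (pi*d) * (1 - Y1 X t) / cos \<beta>) * (cos (pi*d) * cos \<beta> - sin (pi*d) * sin \<beta>)"
    unfolding y2 using cb by (simp add: field_simps)
  also have "\<dots> = (2 * sin (pi*d) * (1 - Y1 X t) / cos \<beta>) * cos (pi*d + \<beta>)"
    by (simp add: cos_add)
  finally show ?thesis by (simp add: \<beta>_def q_def)
qed

lemma cos_sign_aux:
  assumes "-(pi/2) < \<theta>" "\<theta> < 3*pi/2"
  shows "(0 < cos \<theta> \<longleftrightarrow> \<theta> < pi/2) \<and> (cos \<theta> = 0 \<longleftrightarrow> \<theta> = pi/2) \<and> (cos \<theta> < 0 \<longleftrightarrow> pi/2 < \<theta>)"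
proof -
  have c1: "\<theta> < pi/2 \<Longrightarrow> 0 < cos \<theta>" using assms by (intro cos_gt_zero_pi) auto
  have c2: "\<theta> = pi/2 \<Longrightarrow> cos \<theta> = 0" by (metis cos_pi_half)
  have c3: "pi/2 < \<theta> \<Longrightarrow> cos \<theta> < 0"
  proof -
    assume a: "pi/2 < \<theta>"
    have "0 < sin (\<theta> - pi/2)" using a assms by (intro sin_gt_zero) auto
    moreover have "cos \<theta> = - sin (\<theta> - pi/2)" by (simp add: sin_diff)
    ultimately show ?thesis by simp
  qed
  show ?thesis using c1 c2 c3
    by (metis less_irrefl linorder_neqE_linordered_idom order_less_asym)
qed

lemma gg_sign:
  assumes "norm X \<le> 1" "X \<noteq> circ t" "0 < d" "d < 1"
  shows "(0 < cross2 (circ (t+d) - circ t) (X - circ t) \<longleftrightarrow> d < gg X t) \<and>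
         (cross2 (circ (t+d) - circ t) (X - circ t) = 0 \<longleftrightarrow> d = gg X t) \<and>
         (cross2 (circ (t+d) - circ t) (X - circ t) < 0 \<longleftrightarrow> gg X t < d)"
proof -
  define \<beta> where "\<beta> = arctan (Y2 X t / (1 - Y1 X t))"
  define K where "K = 2 * sin (pi*d) * (1 - Y1 X t) / cos \<beta>"
  have y: "1 - Y1 X t > 0" using Y1_lt1[OF assms(1,2)] by simp
  have cb: "cos \<beta> > 0" unfolding \<beta>_def by (simp add: cos_arctan add_pos_nonneg)
  have sd: "sin (pi*d) > 0" using assms by (intro sin_gt_zero) auto
  have K: "K > 0" unfolding K_def using y cb sd by simp
  have cr: "cross2 (circ (t+d) - circ t) (X - circ t) = K * cos (pi*d + \<beta>)"
    unfolding K_def \<beta>_def by (rule cross_cos[OF assms(1,2)])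
  have b1: "-(pi/2) < \<beta>" "\<beta> < pi/2" unfolding \<beta>_def by (rule arctan_lbound, rule arctan_ubound)
  have pd: "0 < pi*d" "pi*d < pi" using assms(3,4) pi_gt_zero by (simp_all add: mult_pos_pos)
  have r: "-(pi/2) < pi*d + \<beta>" "pi*d + \<beta> < 3*pi/2" using b1 pd by linarith+
  have g: "gg X t = 1/2 - \<beta>/pi" unfolding gg_def \<beta>_def by simp
  have e1: "d < gg X t \<longleftrightarrow> pi*d + \<beta> < pi/2" unfolding g by (simp add: field_simps)
  have e2: "d = gg X t \<longleftrightarrow> pi*d + \<beta> = pi/2" unfolding g by (auto simp: field_simps)
  have e3: "gg X t < d \<longleftrightarrow> pi/2 < pi*d + \<beta>" unfolding g by (simp add: field_simps)
  have cs: "(0 < cos (pi*d + \<beta>) \<longleftrightarrow> pi*d + \<beta> < pi/2) \<and> (cos (pi*d + \<beta>) = 0 \<longleftrightarrow> pi*d + \<beta> = pi/2) \<and> (cos (pi*d + \<beta>) < 0 \<longleftrightarrow> pi/2 < pi*d + \<beta>)"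
    by (rule cos_sign_aux[OF r])
  have k1: "0 < K * cos (pi*d + \<beta>) \<longleftrightarrow> 0 < cos (pi*d + \<beta>)" using K by (simp add: zero_less_mult_iff)
  have k2: "K * cos (pi*d + \<beta>) = 0 \<longleftrightarrow> cos (pi*d + \<beta>) = 0" using K by simp
  have k3: "K * cos (pi*d + \<beta>) < 0 \<longleftrightarrow> cos (pi*d + \<beta>) < 0" using K by (simp add: mult_less_0_iff)
  show ?thesis unfolding cr e1 e2 e3 k1 k2 k3 using cs by blast
qed

lemma cross2_affine:
  assumes "a + b + c = 1"
  shows "cross2 u (a *\<^sub>R A + b *\<^sub>R B + c *\<^sub>R C - p) =
     a * cross2 u (A - p) + b * cross2 u (B - p) + c * cross2 u (C - p)"
proof -
  have p: "p = a *\<^sub>R p + b *\<^sub>R p + c *\<^sub>R p" using assms by (metis scaleR_add_left scaleR_one)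
  show ?thesis unfolding cross2_def
    apply (subst (1 2) p)
    by (simp add: algebra_simps)
qed

lemma circ_ne:
  assumes "0 < d" "d < 1"
  shows "circ (t+d) \<noteq> circ t"
proof
  assume e: "circ (t+d) = circ t"
  have "cos (2*pi*(t+d)) = cos (2*pi*t)" "sin (2*pi*(t+d)) = sin (2*pi*t)"
    using arg_cong[OF e, of "\<lambda>v. v$1"] arg_cong[OF e, of "\<lambda>v. v$2"] by simp_all
  then have "cos (2*pi*(t+d) - 2*pi*t) = 1"
    by (simp add: cos_diff)
  then have "cos (2*(pi*d)) = 1" by (simp add: algebra_simps)
  then have "sin (pi*d) ^2 = 0" by (simp add: cos_double_sin)
  moreover have "sin (pi*d) > 0" using assms by (intro sin_gt_zero) (auto simp: mult_pos_pos)
  ultimately show False by simp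
qed

definition mg :: "real^2 \<Rightarrow> real^2 \<Rightarrow> real^2 \<Rightarrow> real \<Rightarrow> real" where
  "mg A B C t = min (gg A t) (min (gg B t) (gg C t))"

lemma gg_sign':
  assumes "norm X < 1" "0 < d" "d < 1"
  shows "(0 < cross2 (circ (t+d) - circ t) (X - circ t) \<longleftrightarrow> d < gg X t) \<and>
         (cross2 (circ (t+d) - circ t) (X - circ t) = 0 \<longleftrightarrow> d = gg X t) \<and>
         (cross2 (circ (t+d) - circ t) (X - circ t) < 0 \<longleftrightarrow> gg X t < d)"
proof -
  have "X \<noteq> circ t" using assms(1) norm_circ[of t] by auto
  then show ?thesis using gg_sign assms by simp
qed

lemma psi_offset_eq:
  assumes nA: "norm A < 1" and nB: "norm B < 1" and nC: "norm C < 1"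
  shows "psi_offset (convex hull {A,B,C}) t = mg A B C t"
proof -
  define S where "S = convex hull {A,B,C}"
  define m where "m = mg A B C t"
  define cr where "cr = (\<lambda>d X. cross2 (circ (t+d) - circ t) (X - circ t))"
  define Z where "Z = {d. 0 < d \<and> d < 1 \<and> supports S (circ t) (circ (t + d))}"
  have S: "S = {u *\<^sub>R A + v *\<^sub>R B + w *\<^sub>R C | u v w. 0 \<le> u \<and> 0 \<le> v \<and> 0 \<le> w \<and> u + v + w = 1}"
    unfolding S_def by (rule convex_hull_3)
  have m0: "0 < m" "m < 1" unfolding m_def mg_def using gg_bounds by (auto simp: min_def)
  have mle: "m \<le> gg A t" "m \<le> gg B t" "m \<le> gg C t" unfolding m_def mg_def by auto
  have meq: "m = gg A t \<or> m = gg B t \<or> m = gg C t" unfolding m_def mg_def by (auto simp: min_def)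
  have sg: "\<And>X d. norm X < 1 \<Longrightarrow> 0 < d \<Longrightarrow> d < 1 \<Longrightarrow>
      (0 < cr d X \<longleftrightarrow> d < gg X t) \<and> (cr d X = 0 \<longleftrightarrow> d = gg X t) \<and> (cr d X < 0 \<longleftrightarrow> gg X t < d)"
    unfolding cr_def by (rule gg_sign')
  have comb: "\<And>d u v w. u + v + w = 1 \<Longrightarrow>
      cross2 (circ (t+d) - circ t) (u *\<^sub>R A + v *\<^sub>R B + w *\<^sub>R C - circ t) = u * cr d A + v * cr d B + w * cr d C"
    unfolding cr_def by (rule cross2_affine)
  have geA: "0 \<le> cr m A" using sg[OF nA m0] mle by (metis linorder_not_le)
  have geB: "0 \<le> cr m B" using sg[OF nB m0] mle by (metis linorder_not_le)
  have geC: "0 \<le> cr m C" using sg[OF nC m0] mle by (metis linorder_not_le)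
  have mZ: "m \<in> Z"
  proof -
    have "circ t \<noteq> circ (t + m)" using circ_ne[OF m0] by metis
    moreover have "\<exists>x\<in>S. cross2 (circ (t + m) - circ t) (x - circ t) = 0"
    proof -
      have "A \<in> S" "B \<in> S" "C \<in> S" unfolding S_def by (simp_all add: hull_inc)
      then show ?thesis using meq sg[OF nA m0] sg[OF nB m0] sg[OF nC m0] unfolding cr_def by blast
    qed
    moreover have "\<forall>x\<in>S. cross2 (circ (t + m) - circ t) (x - circ t) \<ge> 0"
    proof
      fix x assume "x \<in> S"
      then obtain u v w where x: "x = u *\<^sub>R A + v *\<^sub>R B + w *\<^sub>R C" "0 \<le> u" "0 \<le> v" "0 \<le> w" "u+v+w = 1"
        unfolding S by blast
      show "cross2 (circ (t + m) - circ t) (x - circ t) \<ge> 0"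
        unfolding x(1) comb[OF x(5)] using x geA geB geC by (simp add: add_nonneg_nonneg)
    qed
    ultimately show ?thesis unfolding Z_def supports_def using m0 by blast
  qed
  have mmin: "\<And>d. d \<in> Z \<Longrightarrow> m \<le> d"
  proof (rule ccontr)
    fix d assume dZ: "d \<in> Z" and "\<not> m \<le> d"
    then have dm: "d < m" by simp
    have d0: "0 < d" "d < 1" using dZ unfolding Z_def by auto
    have pA: "0 < cr d A" using sg[OF nA d0] mle dm by simp
    have pB: "0 < cr d B" using sg[OF nB d0] mle dm by simp
    have pC: "0 < cr d C" using sg[OF nC d0] mle dm by simp
    from dZ obtain x where "x \<in> S" and x0: "cross2 (circ (t + d) - circ t) (x - circ t) = 0"
      unfolding Z_def supports_def by blast
    then obtain u v w where x: "x = u *\<^sub>R A + v *\<^sub>R B + w *\<^sub>R C" "0 \<le> u" "0 \<le> v" "0 \<le> w" "u+v+w = 1"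
      unfolding S by blast
    have "0 < u * cr d A + v * cr d B + w * cr d C"
    proof -
      have "u * cr d A \<ge> u * min (cr d A) (min (cr d B) (cr d C))" using x(2) by (simp add: mult_left_mono)
      moreover have "v * cr d B \<ge> v * min (cr d A) (min (cr d B) (cr d C))" using x(3) by (simp add: mult_left_mono)
      moreover have "w * cr d C \<ge> w * min (cr d A) (min (cr d B) (cr d C))" using x(4) by (simp add: mult_left_mono)
      moreover have "(u+v+w) * min (cr d A) (min (cr d B) (cr d C)) > 0" using x(5) pA pB pC by simp
      ultimately show ?thesis by (simp add: algebra_simps)
    qed
    with x0 show False unfolding x(1) comb[OF x(5)] by simp
  qed
  have "Inf Z = m" by (rule cInf_eq_minimum[OF mZ mmin])
  then show ?thesis unfolding psi_offset_def Z_def S_def m_def by simp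
qed

lemma dY1: "((\<lambda>t. Y1 X t) has_real_derivative (2*pi*Y2 X t)) (at t)"
  unfolding Y1_def Y2_def
  by (rule derivative_eq_intros refl | simp)+ (simp add: algebra_simps)

lemma dY2: "((\<lambda>t. Y2 X t) has_real_derivative (-2*pi*Y1 X t)) (at t)"
  unfolding Y1_def Y2_def
  by (rule derivative_eq_intros refl | simp)+ (simp add: algebra_simps)

lemma one_minus_div_aux: "(D::real) > 0 \<Longrightarrow> 1 + - (x / D) = (D - x) / D"
  by (simp add: field_simps)

lemma dG:
  assumes "norm X < 1"
  shows "((\<lambda>t. t + gg X t) has_real_derivative
     ((1 - (norm X)^2) / ((1 - Y1 X t)^2 + (Y2 X t)^2))) (at t)"
proof -
  have nc: "X \<noteq> circ s" for s using assms norm_circ[of s] by auto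
  have y: "1 - Y1 X t \<noteq> 0" using Y1_lt1[of X t] assms nc by simp
  define a where "a = Y1 X t"
  define b where "b = Y2 X t"
  have dq: "((\<lambda>t. Y2 X t / (1 - Y1 X t)) has_real_derivative
       ((-2*pi*a) * (1 - a) - b * (- (2*pi*b))) / (1 - a)^2) (at t)"
    using DERIV_divide[OF dY2 DERIV_diff[OF DERIV_const[of 1] dY1]] y
    by (simp add: a_def b_def power2_eq_square)
  have da: "((\<lambda>t. arctan (Y2 X t / (1 - Y1 X t))) has_real_derivative
       inverse (1 + (b/(1-a))^2) * (((-2*pi*a) * (1 - a) - b * (- (2*pi*b))) / (1 - a)^2)) (at t)"
    using DERIV_chain2[OF DERIV_arctan dq] by (simp add: a_def b_def)
  have e: "inverse (1 + (b/(1-a))^2) * (((-2*pi*a) * (1 - a) - b * (- (2*pi*b))) / (1 - a)^2)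
      = 2*pi*(b^2 - a + a^2) / ((1-a)^2 + b^2)"
  proof -
    have ya: "1 - a \<noteq> 0" using y by (simp add: a_def)
    have pos: "(1-a)^2 + b^2 > 0" using ya by (simp add: add_pos_nonneg)
    have sq: "(1-a)^2 \<noteq> 0" using ya by simp
    have "1 + (b/(1-a))^2 = 1 + b^2/(1-a)^2" by (simp add: power_divide)
    also have "\<dots> = ((1-a)^2 + b^2) / (1-a)^2" using sq by (simp add: field_simps)
    finally have h: "1 + (b/(1-a))^2 = ((1-a)^2 + b^2) / (1-a)^2" .
    have p: "(-2*pi*a) * (1 - a) - b * (- (2*pi*b)) = 2*pi*(b^2 - a + a^2)"
      by (simp add: algebra_simps power2_eq_square)
    show ?thesis unfolding h p using sq pos by (simp add: inverse_eq_divide)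
  qed
  have dgg: "((\<lambda>t. gg X t) has_real_derivative - (2*pi*(b^2 - a + a^2) / ((1-a)^2 + b^2)) / pi) (at t)"
  proof -
    have d1: "((\<lambda>t. gg X t) has_real_derivative (0 - (inverse (1 + (b/(1-a))^2) * (((-2*pi*a) * (1 - a) - b * (- (2*pi*b))) / (1 - a)^2)) / pi)) (at t)"
      unfolding gg_def by (rule DERIV_diff[OF DERIV_const DERIV_cdivide[OF da]])
    show ?thesis using d1 unfolding e by simp
  qed
  have f: "1 + - (2*pi*(b^2 - a + a^2) / ((1-a)^2 + b^2)) / pi = (1 - (norm X)^2) / ((1 - a)^2 + b^2)"
  proof -
    have ya: "1 - a \<noteq> 0" using y by (simp add: a_def)
    have pos: "(1-a)^2 + b^2 > 0" using ya by (simp add: add_pos_nonneg)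
    have n: "(norm X)^2 = a^2 + b^2" using Y_normsq[of X t] by (simp add: a_def b_def)
    have q1: "(2*pi*(b^2 - a + a^2) / ((1-a)^2 + b^2)) / pi = 2*(b^2 - a + a^2) / ((1-a)^2 + b^2)"
      by simp
    have q2: "1 + - (2*(b^2 - a + a^2) / ((1-a)^2 + b^2)) = ((1-a)^2 + b^2 - 2*(b^2 - a + a^2)) / ((1-a)^2 + b^2)"
      using pos by (rule one_minus_div_aux)
    have q3: "(1-a)^2 + b^2 - 2*(b^2 - a + a^2) = 1 - (a^2 + b^2)"
      by (simp add: algebra_simps power2_eq_square)
    show ?thesis unfolding n minus_divide_left[symmetric] q1 q2 q3 by simp
  qed
  show ?thesis using DERIV_add[OF DERIV_ident dgg] f by (simp add: a_def b_def)
qed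

lemma G_mono:
  assumes "norm X < 1" "x \<le> y"
  shows "x + gg X x \<le> y + gg X y"
proof (rule DERIV_nonneg_imp_increasing_open[OF assms(2)])
  fix s assume "x < s" "s < y"
  show "\<exists>D. ((\<lambda>t. t + gg X t) has_real_derivative D) (at s) \<and> 0 \<le> D"
  proof (intro exI conjI)
    show "((\<lambda>t. t + gg X t) has_real_derivative ((1 - (norm X)^2) / ((1 - Y1 X s)^2 + (Y2 X s)^2))) (at s)"
      by (rule dG[OF assms(1)])
    have "(norm X)^2 \<le> 1" using assms(1) by (simp add: abs_square_le_1)
    then show "0 \<le> (1 - (norm X)^2) / ((1 - Y1 X s)^2 + (Y2 X s)^2)" by simp
  qed
next
  show "continuous_on {x..y} (\<lambda>t. t + gg X t)"
    using dG[OF assms(1)] by (meson DERIV_isCont continuous_at_imp_continuous_on)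
qed

lemma Y_periodic: "Y1 X (t+1) = Y1 X t" "Y2 X (t+1) = Y2 X t"
proof -
  have "cos (2*pi*(t+1)) = cos (2*pi*t)" "sin (2*pi*(t+1)) = sin (2*pi*t)"
    by (simp_all add: distrib_left)
  then show "Y1 X (t+1) = Y1 X t" "Y2 X (t+1) = Y2 X t" unfolding Y1_def Y2_def by simp_all
qed

lemma gg_periodic: "gg X (t+1) = gg X t"
  unfolding gg_def Y_periodic ..

lemma rot_third:
  fixes F :: "real \<Rightarrow> real"
  assumes mono: "\<And>x y. x \<le> y \<Longrightarrow> F x \<le> F y"
    and per: "\<And>x. F (x+1) = F x + 1"
    and lo: "\<And>x. x \<le> F x" and hi: "\<And>x. F x \<le> x + 1"
    and L: "F (F (F x0)) \<ge> x0 + 1" and U: "F (F (F y0)) \<le> y0 + 1"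
  shows "(\<lambda>n. (F ^^ n) 0 / real n) \<longlonglongrightarrow> 1/3"
proof -
  have pn: "F (x + real m) = F x + real m" for x m
  proof (induction m)
    case (Suc m)
    have "x + real (Suc m) = (x + real m) + 1" by simp
    then show ?case using per[of "x + real m"] Suc.IH by (simp add: algebra_simps)
  qed simp
  have pi1: "F (x + of_int k) = F x + of_int k" for x k
  proof (cases "k \<ge> 0")
    case True then show ?thesis using pn[of x "nat k"] by simp
  next
    case False
    define m where "m = nat (-k)"
    have k: "k = - int m" using False by (simp add: m_def)
    have "F (x + of_int k) + real m = F (x + of_int k + real m)" using pn by simp
    also have "\<dots> = F x" by (simp add: k)
    finally show ?thesis by (simp add: k)
  qed
  have pin: "(F ^^ n) (x + of_int k) = (F ^^ n) x + of_int k" for n x k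
    by (induction n) (simp_all add: pi1)
  have monon: "x \<le> y \<Longrightarrow> (F ^^ n) x \<le> (F ^^ n) y" for n x y
    by (induction n) (simp_all add: mono)
  have lon: "x \<le> (F ^^ n) x" for n x
  proof (induction n)
    case (Suc n) then show ?case using lo[of "(F ^^ n) x"] by simp
  qed simp
  have hin: "(F ^^ n) x \<le> x + real n" for n x
  proof (induction n)
    case (Suc n) then show ?case using hi[of "(F ^^ n) x"] by simp
  qed simp
  have f3: "(F ^^ 3) x = F (F (F x))" for x by (simp add: numeral_3_eq_3)
  have Lk: "(F ^^ (3*k)) x0 \<ge> x0 + real k" for k
  proof (induction k)
    case (Suc k)
    have "(F ^^ (3*Suc k)) x0 = (F ^^ 3) ((F ^^ (3*k)) x0)"
      by (simp only: mult_Suc_right funpow_add o_apply)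
    also have "\<dots> \<ge> (F ^^ 3) (x0 + of_int (int k))" using monon Suc by simp
    also have "(F ^^ 3) (x0 + of_int (int k)) = (F ^^ 3) x0 + real k" using pin[of 3 x0 "int k"] by simp
    finally show ?case using L f3 by simp
  qed simp
  have Uk: "(F ^^ (3*k)) y0 \<le> y0 + real k" for k
  proof (induction k)
    case (Suc k)
    have "(F ^^ (3*Suc k)) y0 = (F ^^ 3) ((F ^^ (3*k)) y0)"
      by (simp only: mult_Suc_right funpow_add o_apply)
    also have "\<dots> \<le> (F ^^ 3) (y0 + of_int (int k))" using monon Suc by simp
    also have "(F ^^ 3) (y0 + of_int (int k)) = (F ^^ 3) y0 + real k" using pin[of 3 y0 "int k"] by simp
    finally show ?case using U f3 by simp
  qed simp
  have bnd: "real n / 3 - 2 \<le> (F ^^ n) 0 \<and> (F ^^ n) 0 \<le> real n / 3 + 3" for n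
  proof -
    define k where "k = n div 3"
    define r where "r = n mod 3"
    have n: "n = r + 3*k" unfolding k_def r_def by simp
    have r2: "real r \<le> 2" unfolding r_def by simp
    have kn: "real n = real r + 3 * real k" using n by simp
    define p where "p = \<lceil>x0\<rceil>"
    have "(F ^^ n) (x0 - of_int p) \<le> (F ^^ n) 0"
      by (rule monon) (simp add: p_def)
    moreover have "(F ^^ n) (x0 - of_int p) = (F ^^ n) x0 - of_int p"
      using pin[of n x0 "-p"] by simp
    moreover have "(F ^^ n) x0 \<ge> x0 + real k"
    proof -
      have "(F ^^ n) x0 = (F ^^ r) ((F ^^ (3*k)) x0)" unfolding n by (simp add: funpow_add)
      then show ?thesis using lon[of "(F ^^ (3*k)) x0" r] Lk[of k] by simp
    qed
    moreover have "x0 - of_int p > -1" unfolding p_def by linarith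
    ultimately have low: "(F ^^ n) 0 \<ge> real k - 1" by linarith
    define q where "q = \<lceil>-y0\<rceil>"
    have "(F ^^ n) 0 \<le> (F ^^ n) (y0 + of_int q)"
      by (rule monon) (simp add: q_def, linarith)
    moreover have "(F ^^ n) (y0 + of_int q) = (F ^^ n) y0 + of_int q" by (rule pin)
    moreover have "(F ^^ n) y0 \<le> y0 + real k + real r"
    proof -
      have "(F ^^ n) y0 = (F ^^ r) ((F ^^ (3*k)) y0)" unfolding n by (simp add: funpow_add)
      then show ?thesis using hin[of r "(F ^^ (3*k)) y0"] Uk[of k] by simp
    qed
    moreover have "y0 + of_int q < 1" unfolding q_def by linarith
    ultimately have up: "(F ^^ n) 0 \<le> real k + real r + 1" by linarith
    show ?thesis using low up kn r2 by linarith
  qed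
  have l1: "(\<lambda>n. 1/3 - 3 / real n) \<longlonglongrightarrow> 1/3"
    using tendsto_diff[OF tendsto_const[of "1/3::real"] lim_const_over_n[of 3]] by simp
  have l2: "(\<lambda>n. 1/3 + 3 / real n) \<longlonglongrightarrow> 1/3"
    using tendsto_add[OF tendsto_const[of "1/3::real"] lim_const_over_n[of 3]] by simp
  show ?thesis
  proof (rule tendsto_sandwich[OF _ _ l1 l2])
    show "\<forall>\<^sub>F n in sequentially. 1/3 - 3 / real n \<le> (F ^^ n) 0 / real n"
      using eventually_gt_at_top[of "0::nat"]
    proof eventually_elim
      case (elim n)
      then have p: "real n > 0" by simp
      have "1/3 - 3 / real n = (real n / 3 - 3) / real n" using p by (simp add: field_simps)
      also have "\<dots> \<le> (F ^^ n) 0 / real n"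
        using bnd[of n] p by (intro divide_right_mono) auto
      finally show ?case .
    qed
    show "\<forall>\<^sub>F n in sequentially. (F ^^ n) 0 / real n \<le> 1/3 + 3 / real n"
      using eventually_gt_at_top[of "0::nat"]
    proof eventually_elim
      case (elim n)
      then have p: "real n > 0" by simp
      have "(F ^^ n) 0 / real n \<le> (real n / 3 + 3) / real n"
        using bnd[of n] p by (intro divide_right_mono) auto
      also have "\<dots> = 1/3 + 3 / real n" using p by (simp add: field_simps)
      finally show ?case .
    qed
  qed
qed

lemma circ_periodic_nat: "circ (t + real n) = circ t"
proof (induction n)
  case (Suc n)
  have "t + real (Suc n) = (t + real n) + 1" by simp
  then show ?case using circ_periodic[of "t + real n"] Suc by (simp add: algebra_simps)
qed simp

lemma circ_periodic_int: "circ (t + of_int k) = circ t"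
proof (cases "k \<ge> 0")
  case True then show ?thesis using circ_periodic_nat[of t "nat k"] by simp
next
  case False
  define m where "m = nat (-k)"
  have k: "k = - int m" using False by (simp add: m_def)
  have "circ (t + of_int k) = circ (t + of_int k + real m)" using circ_periodic_nat by simp
  then show ?thesis by (simp add: k)
qed

lemma circ_surj:
  assumes "norm P = 1"
  obtains x where "circ x = P"
proof -
  have "(P$1)^2 + (P$2)^2 = 1" using assms normsq2[of P] by simp
  then obtain t where t: "P$1 = cos t" "P$2 = sin t" by (rule sincos_total_2pi)
  have "circ (t / (2*pi)) = P" using t by (simp add: vec_eq2)
  then show ?thesis by (rule that)
qed

lemma circ_rep_after:
  assumes "norm P = 1"
  obtains d where "0 \<le> d" "d < 1" "circ (x + d) = P"
proof -
  obtain t where t: "circ t = P" using circ_surj[OF assms] by blast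
  define d where "d = (t - x) - of_int \<lfloor>t - x\<rfloor>"
  have "0 \<le> d" "d < 1" unfolding d_def by linarith+
  moreover have "circ (x + d) = P"
    using circ_periodic_int[of t "- \<lfloor>t - x\<rfloor>"] t unfolding d_def by (simp add: algebra_simps)
  ultimately show ?thesis by (rule that)
qed

lemma gg_circ:
  assumes "0 < e" "e < 1"
  shows "gg (circ (x + e)) x = e"
proof -
  have n: "norm (circ (x+e)) \<le> 1" by simp
  have ne: "circ (x+e) \<noteq> circ x" by (rule circ_ne[OF assms])
  have "cross2 (circ (x+e) - circ x) (circ (x+e) - circ x) = 0" by (simp add: cross2_def)
  then show ?thesis using gg_sign[OF n ne assms] by simp
qed

lemma circ_params:
  assumes "norm P1 = 1" "norm P2 = 1" "norm P3 = 1" "cross2 (P2 - P1) (P3 - P1) > 0"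
  shows "\<exists>x z1 z2. x < z1 \<and> z1 < z2 \<and> z2 < x + 1 \<and> circ x = P1 \<and> circ z1 = P2 \<and> circ z2 = P3"
proof -
  obtain x where x: "circ x = P1" using circ_surj[OF assms(1)] by blast
  obtain d where d: "0 \<le> d" "d < 1" "circ (x + d) = P2" using circ_rep_after[OF assms(2)] by blast
  obtain e where e: "0 \<le> e" "e < 1" "circ (x + e) = P3" using circ_rep_after[OF assms(3)] by blast
  have "d \<noteq> 0" using assms(4) d x by (auto simp: cross2_def)
  then have d0: "0 < d" using d by simp
  have "e \<noteq> 0" using assms(4) e x by (auto simp: cross2_def)
  then have e0: "0 < e" using e by simp
  have n: "norm (circ (x+e)) \<le> 1" by simp
  have ne: "circ (x+e) \<noteq> circ x" by (rule circ_ne[OF e0 e(2)])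
  have "d < gg (circ (x+e)) x" using gg_sign[OF n ne d0 d(2)] assms(4) x d e by simp
  then have "d < e" using gg_circ[OF e0 e(2)] by simp
  then show ?thesis using x d e d0 by (intro exI[of _ x] exI[of _ "x+d"] exI[of _ "x+e"]) auto
qed

section \<open>Properties of the lift for a triangle\<close>

lemma psi_lift_eq:
  assumes "norm A < 1" "norm B < 1" "norm C < 1"
  shows "psi_lift (convex hull {A,B,C}) x = x + mg A B C x"
  unfolding psi_lift_def psi_offset_eq[OF assms] ..

lemma lift_props:
  assumes "norm A < 1" "norm B < 1" "norm C < 1"
  defines "F \<equiv> psi_lift (convex hull {A,B,C})"
  shows "\<And>x y. x \<le> y \<Longrightarrow> F x \<le> F y"
    and "\<And>x. F (x+1) = F x + 1"
    and "\<And>x. x \<le> F x" and "\<And>x. F x \<le> x + 1"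
proof -
  have Fe: "F x = x + mg A B C x" for x unfolding F_def by (rule psi_lift_eq[OF assms(1-3)])
  have e: "x + mg A B C x = min (x + gg A x) (min (x + gg B x) (x + gg C x))" for x
    unfolding mg_def by (simp add: min_add_distrib_left)
  show "F x \<le> F y" if "x \<le> y" for x y
    unfolding Fe e using G_mono[OF assms(1) that] G_mono[OF assms(2) that] G_mono[OF assms(3) that]
    by (simp add: min_le_iff_disj)
  show "F (x+1) = F x + 1" for x unfolding Fe mg_def gg_periodic by simp
  show "x \<le> F x" for x unfolding Fe mg_def using gg_bounds(1)[of A x] gg_bounds(1)[of B x] gg_bounds(1)[of C x]
    by (simp add: min_def)
  show "F x \<le> x + 1" for x unfolding Fe mg_def using gg_bounds(2)[of A x] gg_bounds(2)[of B x] gg_bounds(2)[of C x]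
    by (simp add: min_def)
qed

lemma lift_ge_crit:
  assumes "norm A < 1" "norm B < 1" "norm C < 1" "x < z" "z < x + 1"
    and "\<forall>X\<in>{A,B,C}. cross2 (circ z - circ x) (X - circ x) \<ge> 0"
  shows "psi_lift (convex hull {A,B,C}) x \<ge> z"
proof -
  define d where "d = z - x"
  have d: "0 < d" "d < 1" using assms(4,5) unfolding d_def by auto
  have z: "z = x + d" unfolding d_def by simp
  have "d \<le> gg X x" if "X \<in> {A,B,C}" for X
  proof -
    have nX: "norm X < 1" using that assms(1-3) by auto
    have "cross2 (circ (x+d) - circ x) (X - circ x) \<ge> 0" using assms(6) that z by blast
    then show ?thesis using gg_sign'[OF nX d, of x] by (meson not_le not_less)
  qed
  then have "d \<le> mg A B C x" unfolding mg_def by simp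
  then show ?thesis unfolding psi_lift_eq[OF assms(1-3)] z by simp
qed

lemma lift_le_crit:
  assumes "norm A < 1" "norm B < 1" "norm C < 1" "x < z" "z < x + 1"
    and "W \<in> {A,B,C}" "cross2 (circ z - circ x) (W - circ x) \<le> 0"
  shows "psi_lift (convex hull {A,B,C}) x \<le> z"
proof -
  define d where "d = z - x"
  have d: "0 < d" "d < 1" using assms(4,5) unfolding d_def by auto
  have z: "z = x + d" unfolding d_def by simp
  have nW: "norm W < 1" using assms(1-3,6) by auto
  have "cross2 (circ (x+d) - circ x) (W - circ x) \<le> 0" using assms(7) z by simp
  then have "gg W x \<le> d" using gg_sign'[OF nW d, of x] by (meson not_le not_less)
  moreover have "mg A B C x \<le> gg W x" using assms(6) unfolding mg_def by auto
  ultimately show ?thesis unfolding psi_lift_eq[OF assms(1-3)] z by simp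
qed

lemma U_crit:
  assumes nA: "norm A < 1" and nB: "norm B < 1" and nC: "norm C < 1"
    and p: "norm P1 = 1" "norm P2 = 1" "norm P3 = 1" "cross2 (P2 - P1) (P3 - P1) > 0"
    and w: "W1 \<in> {A,B,C}" "W2 \<in> {A,B,C}" "W3 \<in> {A,B,C}"
    and c: "cross2 (P2 - P1) (W1 - P1) \<le> 0" "cross2 (P3 - P2) (W2 - P2) \<le> 0" "cross2 (P1 - P3) (W3 - P3) \<le> 0"
  shows "\<exists>y. psi_lift (convex hull {A,B,C}) (psi_lift (convex hull {A,B,C}) (psi_lift (convex hull {A,B,C}) y)) \<le> y + 1"
proof -
  define F where "F = psi_lift (convex hull {A,B,C})"
  note props = lift_props[OF nA nB nC, folded F_def]
  obtain x z1 z2 where z: "x < z1" "z1 < z2" "z2 < x + 1" "circ x = P1" "circ z1 = P2" "circ z2 = P3"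
    using circ_params[OF p] by blast
  have c1: "circ (x+1) = P1" using circ_periodic z(4) by simp
  have f1: "F x \<le> z1" unfolding F_def
    by (rule lift_le_crit[OF nA nB nC z(1) _ w(1)]) (use z c in auto)
  have f2: "F z1 \<le> z2" unfolding F_def
    by (rule lift_le_crit[OF nA nB nC z(2) _ w(2)]) (use z c in auto)
  have f3: "F z2 \<le> x + 1" unfolding F_def
    by (rule lift_le_crit[OF nA nB nC _ _ w(3)]) (use z c c1 in auto)
  have "F (F (F x)) \<le> F (F z1)" using props(1) f1 by blast
  also have "\<dots> \<le> F z2" using props(1) f2 by blast
  also have "\<dots> \<le> x + 1" by (rule f3)
  finally show ?thesis unfolding F_def by blast
qed

lemma L_crit:
  assumes nA: "norm A < 1" and nB: "norm B < 1" and nC: "norm C < 1"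
    and p: "norm P1 = 1" "norm P2 = 1" "norm P3 = 1" "cross2 (P2 - P1) (P3 - P1) > 0"
    and c: "\<forall>X\<in>{A,B,C}. cross2 (P2 - P1) (X - P1) \<ge> 0"
      "\<forall>X\<in>{A,B,C}. cross2 (P3 - P2) (X - P2) \<ge> 0" "\<forall>X\<in>{A,B,C}. cross2 (P1 - P3) (X - P3) \<ge> 0"
  shows "\<exists>y. psi_lift (convex hull {A,B,C}) (psi_lift (convex hull {A,B,C}) (psi_lift (convex hull {A,B,C}) y)) \<ge> y + 1"
proof -
  define F where "F = psi_lift (convex hull {A,B,C})"
  note props = lift_props[OF nA nB nC, folded F_def]
  obtain x z1 z2 where z: "x < z1" "z1 < z2" "z2 < x + 1" "circ x = P1" "circ z1 = P2" "circ z2 = P3"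
    using circ_params[OF p] by blast
  have c1: "circ (x+1) = P1" using circ_periodic z(4) by simp
  have f1: "F x \<ge> z1" unfolding F_def
    by (rule lift_ge_crit[OF nA nB nC z(1)]) (use z c in auto)
  have f2: "F z1 \<ge> z2" unfolding F_def
    by (rule lift_ge_crit[OF nA nB nC z(2)]) (use z c in auto)
  have f3: "F z2 \<ge> x + 1" unfolding F_def
    by (rule lift_ge_crit[OF nA nB nC]) (use z c c1 in auto)
  have "x + 1 \<le> F z2" by (rule f3)
  also have "\<dots> \<le> F (F z1)" using props(1) f2 by blast
  also have "\<dots> \<le> F (F (F x))" using props(1) f1 by blast
  finally show ?thesis unfolding F_def by blast
qed

lemma ray_hit:
  fixes G V :: "real^2"
  assumes "norm V < 1" "V \<noteq> G"
  shows "\<exists>\<mu>\<ge>1. norm (G + \<mu> *\<^sub>R (V - G)) = 1"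
proof -
  define u where "u = V - G"
  have u: "norm u > 0" using assms(2) unfolding u_def by simp
  define M where "M = (1 + norm G) / norm u + 1"
  have M1: "1 \<le> M" unfolding M_def using u by simp
  have "norm (G + M *\<^sub>R u) \<ge> M * norm u - norm G"
    using norm_triangle_ineq2[of "M *\<^sub>R u" "- G"] M1 by (simp add: algebra_simps)
  moreover have "M * norm u = 1 + norm G + norm u" unfolding M_def using u by (simp add: field_simps)
  ultimately have hi: "1 \<le> norm (G + M *\<^sub>R u)" using u by linarith
  have lo: "norm (G + 1 *\<^sub>R u) \<le> 1" using assms(1) unfolding u_def by simp
  have cont: "continuous_on {1..M} (\<lambda>\<mu>. norm (G + \<mu> *\<^sub>R u))"
    by (intro continuous_intros)
  obtain \<mu> where "1 \<le> \<mu>" "\<mu> \<le> M" "norm (G + \<mu> *\<^sub>R u) = 1"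
    using IVT'[of "\<lambda>\<mu>. norm (G + \<mu> *\<^sub>R u)" 1 1 M, OF lo hi M1 cont] by blast
  then show ?thesis unfolding u_def by blast
qed

lemma chord_id1: "cross2 ((G + b *\<^sub>R q) - (G + a *\<^sub>R p)) (G + p - (G + a *\<^sub>R p)) = (a - 1) * b * cross2 p q"
  by (simp add: cross2_def algebra_simps)
lemma chord_id2: "cross2 ((G + b *\<^sub>R q) - (G + a *\<^sub>R p)) (G + q - (G + a *\<^sub>R p)) = a * (b - 1) * cross2 p q"
  by (simp add: cross2_def algebra_simps)
lemma chord_id3: "cross2 ((G + b *\<^sub>R q) - (G + a *\<^sub>R p)) (G + c *\<^sub>R r - (G + a *\<^sub>R p)) =
    b * c * cross2 q r + a * b * cross2 p q + a * c * cross2 r p"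
  by (simp add: cross2_def algebra_simps)

lemma L_any:
  assumes nA: "norm A < 1" and nB: "norm B < 1" and nC: "norm C < 1"
    and or: "cross2 (B - A) (C - A) > 0"
  shows "\<exists>y. psi_lift (convex hull {A,B,C}) (psi_lift (convex hull {A,B,C}) (psi_lift (convex hull {A,B,C}) y)) \<ge> y + 1"
proof -
  define G where "G = (1/3) *\<^sub>R (A + B + C)"
  define c where "c = cross2 (B - A) (C - A) / 3"
  have c0: "c > 0" using or unfolding c_def by simp
  have cAB: "cross2 (A - G) (B - G) = c" unfolding c_def G_def by (simp add: cross2_def algebra_simps)
  have cBC: "cross2 (B - G) (C - G) = c" unfolding c_def G_def by (simp add: cross2_def algebra_simps)
  have cCA: "cross2 (C - G) (A - G) = c" unfolding c_def G_def by (simp add: cross2_def algebra_simps)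
  have AG: "A \<noteq> G" using cAB c0 by (auto simp: cross2_def)
  have BG: "B \<noteq> G" using cBC c0 by (auto simp: cross2_def)
  have CG: "C \<noteq> G" using cCA c0 by (auto simp: cross2_def)
  obtain a where a: "a \<ge> 1" "norm (G + a *\<^sub>R (A - G)) = 1" using ray_hit[OF nA AG] by blast
  obtain b where b: "b \<ge> 1" "norm (G + b *\<^sub>R (B - G)) = 1" using ray_hit[OF nB BG] by blast
  obtain d where d: "d \<ge> 1" "norm (G + d *\<^sub>R (C - G)) = 1" using ray_hit[OF nC CG] by blast
  define P1 where "P1 = G + a *\<^sub>R (A - G)"
  define P2 where "P2 = G + b *\<^sub>R (B - G)"
  define P3 where "P3 = G + d *\<^sub>R (C - G)"
  have eA: "A = G + (A - G)" and eB: "B = G + (B - G)" and eC: "C = G + (C - G)" by simp_all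
  have or2: "cross2 (P2 - P1) (P3 - P1) > 0"
    unfolding P1_def P2_def P3_def chord_id3 cAB cBC cCA using a b d c0 by (simp add: add_pos_pos)
  have k1: "\<forall>X\<in>{A,B,C}. cross2 (P2 - P1) (X - P1) \<ge> 0"
  proof -
    have "cross2 (P2 - P1) (A - P1) \<ge> 0" unfolding P1_def P2_def
      by (subst (2) eA, subst chord_id1) (use a b c0 cAB in simp)
    moreover have "cross2 (P2 - P1) (B - P1) \<ge> 0" unfolding P1_def P2_def
      by (subst (2) eB, subst chord_id2) (use a b c0 cAB in simp)
    moreover have "cross2 (P2 - P1) (C - P1) \<ge> 0" unfolding P1_def P2_def
      using chord_id3[of G b "B - G" a "A - G" 1 "C - G"] a b c0 cAB cBC cCA by simp
    ultimately show ?thesis by simp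
  qed
  have k2: "\<forall>X\<in>{A,B,C}. cross2 (P3 - P2) (X - P2) \<ge> 0"
  proof -
    have "cross2 (P3 - P2) (B - P2) \<ge> 0" unfolding P3_def P2_def
      by (subst (2) eB, subst chord_id1) (use d b c0 cBC in simp)
    moreover have "cross2 (P3 - P2) (C - P2) \<ge> 0" unfolding P3_def P2_def
      by (subst (2) eC, subst chord_id2) (use d b c0 cBC in simp)
    moreover have "cross2 (P3 - P2) (A - P2) \<ge> 0" unfolding P3_def P2_def
      using chord_id3[of G d "C - G" b "B - G" 1 "A - G"] d b c0 cAB cBC cCA by simp
    ultimately show ?thesis by simp
  qed
  have k3: "\<forall>X\<in>{A,B,C}. cross2 (P1 - P3) (X - P3) \<ge> 0"
  proof -
    have "cross2 (P1 - P3) (C - P3) \<ge> 0" unfolding P3_def P1_def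
      by (subst (2) eC, subst chord_id1) (use d a c0 cCA in simp)
    moreover have "cross2 (P1 - P3) (A - P3) \<ge> 0" unfolding P3_def P1_def
      by (subst (2) eA, subst chord_id2) (use d a c0 cCA in simp)
    moreover have "cross2 (P1 - P3) (B - P3) \<ge> 0" unfolding P3_def P1_def
      using chord_id3[of G a "A - G" d "C - G" 1 "B - G"] d a c0 cAB cBC cCA by simp
    ultimately show ?thesis by simp
  qed
  show ?thesis
    by (rule L_crit[OF nA nB nC _ _ _ or2 k1 k2 k3]) (use a b d in \<open>simp_all add: P1_def P2_def P3_def\<close>)
qed

lemma lagrange2: "(cross2 p q)^2 + (inner p q)^2 = (norm p)^2 * (norm q)^2"
  unfolding cross2_def inner2 normsq2 by (simp add: power2_eq_square algebra_simps)

lemma cross_bound: "\<bar>cross2 p q\<bar> \<le> norm p * norm q"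
proof -
  have "(cross2 p q)^2 \<le> (norm p * norm q)^2"
    using lagrange2[of p q] zero_le_power2[of "inner p q"] unfolding power_mult_distrib by linarith
  then have "\<bar>cross2 p q\<bar> \<le> \<bar>norm p * norm q\<bar>" by (simp only: abs_le_square_iff)
  then show ?thesis by simp
qed

lemma cross_bilin: "cross2 (a *\<^sub>R p + b *\<^sub>R q) (c *\<^sub>R p + d *\<^sub>R q) = (a*d - b*c) * cross2 p q"
  by (simp add: cross2_def algebra_simps)

lemma decomp2: "(u::real^2) = u$1 *\<^sub>R axis 1 1 + u$2 *\<^sub>R axis 2 1"
  by (simp add: vec_eq2 axis_def)

lemma lin_iso_cross:
  fixes U :: "real^2 \<Rightarrow> real^2"
  assumes lin: "linear U" and n: "\<And>y. norm (U y) = norm y"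
  shows "\<exists>\<epsilon>. (\<epsilon> = 1 \<or> \<epsilon> = -1) \<and> (\<forall>u v. cross2 (U u) (U v) = \<epsilon> * cross2 u v)"
proof -
  define e1 :: "real^2" where "e1 = axis 1 1"
  define e2 :: "real^2" where "e2 = axis 2 1"
  define \<epsilon> where "\<epsilon> = cross2 (U e1) (U e2)"
  have Uu: "U u = u$1 *\<^sub>R U e1 + u$2 *\<^sub>R U e2" for u
  proof -
    have "U u = U (u$1 *\<^sub>R e1 + u$2 *\<^sub>R e2)" unfolding e1_def e2_def using decomp2[of u] by (rule arg_cong)
    also have "\<dots> = u$1 *\<^sub>R U e1 + u$2 *\<^sub>R U e2" by (simp add: linear_add[OF lin] linear_scale[OF lin])
    finally show ?thesis .
  qed
  have cr: "cross2 (U u) (U v) = \<epsilon> * cross2 u v" for u v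
    unfolding Uu[of u] Uu[of v] cross_bilin \<epsilon>_def by (simp add: cross2_def)
  have n1: "norm (U e1) = 1" "norm (U e2) = 1" unfolding n e1_def e2_def by simp_all
  have "(norm (U e1 - U e2))^2 = 2"
  proof -
    have "U e1 - U e2 = U (e1 - e2)" using lin by (simp add: linear_diff)
    then have "norm (U e1 - U e2) = norm (e1 - e2)" using n by simp
    moreover have "(norm (e1 - e2))^2 = 2" unfolding normsq2 e1_def e2_def by (simp add: axis_def)
    ultimately show ?thesis by simp
  qed
  moreover have "(norm (U e1 - U e2))^2 = (norm (U e1))^2 + (norm (U e2))^2 - 2 * inner (U e1) (U e2)"
    by (simp add: power2_norm_eq_inner inner_diff algebra_simps inner_commute)
  ultimately have "inner (U e1) (U e2) = 0" using n1 by simp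
  then have "\<epsilon>^2 = 1" using lagrange2[of "U e1" "U e2"] n1 unfolding \<epsilon>_def by simp
  then have "\<epsilon> = 1 \<or> \<epsilon> = -1" by (simp add: power2_eq_1_iff)
  then show ?thesis using cr by blast
qed

lemma perturb:
  fixes U :: "real^2 \<Rightarrow> real^2"
  assumes lin: "linear U" and n: "\<And>y. norm (U y) = norm y"
    and eps: "\<epsilon> = 1 \<or> \<epsilon> = -1" and cr: "\<And>u v. cross2 (U u) (U v) = \<epsilon> * cross2 u v"
    and g: "norm g = 1" "norm g' = 1" and Y: "norm Y \<le> 1"
    and k: "cross2 (g' - g) (Y - g) \<le> - \<kappa>"
    and lam: "0 < l" "l \<le> 1" and small: "2 * norm b + 2 * (1 - l) < \<kappa>"
  shows "\<epsilon> * cross2 (U g' - U g) (b + l *\<^sub>R U Y - U g) < 0"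
proof -
  define w where "w = g' - g"
  have nw: "norm w \<le> 2" unfolding w_def using g norm_triangle_ineq4[of g' g] by simp
  have e1: "U g' - U g = U w" unfolding w_def using lin by (simp add: linear_diff)
  have e2: "b + l *\<^sub>R U Y - U g = b + U (l *\<^sub>R Y - g)" using lin by (simp add: linear_diff linear_scale)
  have split: "cross2 (U w) (b + U (l *\<^sub>R Y - g)) = cross2 (U w) b + cross2 (U w) (U (l *\<^sub>R Y - g))"
    by (simp add: cross2_def algebra_simps)
  have c2: "cross2 w (l *\<^sub>R Y - g) = cross2 w (Y - g) - (1 - l) * cross2 w Y"
    by (simp add: cross2_def algebra_simps)
  have b1: "\<bar>cross2 (U w) b\<bar> \<le> 2 * norm b"
  proof -
    have "norm w * norm b \<le> 2 * norm b" using nw by (simp add: mult_right_mono)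
    then show ?thesis using cross_bound[of "U w" b] n[of w] by simp
  qed
  have b2: "\<bar>cross2 w Y\<bar> \<le> 2"
  proof -
    have "norm w * norm Y \<le> 2 * 1" using nw Y by (intro mult_mono) auto
    then show ?thesis using cross_bound[of w Y] by simp
  qed
  have ee: "\<epsilon> * \<epsilon> = 1" using eps by auto
  have ee2: "\<epsilon> * (\<epsilon> * x) = x" for x using ee by (metis mult.assoc mult_1)
  have "\<epsilon> * cross2 (U g' - U g) (b + l *\<^sub>R U Y - U g) =
      \<epsilon> * cross2 (U w) b + (cross2 w (Y - g) - (1 - l) * cross2 w Y)"
    unfolding e1 e2 split cr c2 by (simp add: algebra_simps ee2)
  moreover have "\<epsilon> * cross2 (U w) b \<le> 2 * norm b" using b1 eps by auto
  moreover have "- ((1 - l) * cross2 w Y) \<le> 2 * (1 - l)"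
  proof -
    have "- ((1 - l) * cross2 w Y) \<le> (1 - l) * \<bar>cross2 w Y\<bar>" using lam(2)
      by (metis abs_ge_minus_self abs_mult abs_of_nonneg diff_ge_0_iff_ge minus_mult_right)
    also have "\<dots> \<le> (1 - l) * 2" using b2 lam(2) by (intro mult_left_mono) auto
    finally show ?thesis by simp
  qed
  ultimately show ?thesis using k small unfolding w_def by linarith
qed

lemma cross_rev: "cross2 (q - p) (v - p) = - cross2 (p - q) (v - q)"
  by (simp add: cross2_def algebra_simps)

lemma ref_result:
  fixes x1 x2 x3 g1 g2 g3 w1 w2 w3 :: "real^2"
  assumes nx: "norm x1 \<le> 1" "norm x2 \<le> 1" "norm x3 \<le> 1"
    and ncol: "cross2 (x2 - x1) (x3 - x1) \<noteq> 0"
    and mu: "0 \<le> m1" "0 \<le> m2" "0 \<le> m3" "m1 + m2 + m3 = 1" "m1 *\<^sub>R x1 + m2 *\<^sub>R x2 + m3 *\<^sub>R x3 = 0"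
      "0 < m1 \<Longrightarrow> norm x1 = 1" "0 < m2 \<Longrightarrow> norm x2 = 1" "0 < m3 \<Longrightarrow> norm x3 = 1"
    and g: "norm g1 = 1" "norm g2 = 1" "norm g3 = 1" "cross2 (g2 - g1) (g3 - g1) > 0"
    and w: "w1 \<in> {x1,x2,x3}" "w2 \<in> {x1,x2,x3}" "w3 \<in> {x1,x2,x3}"
    and k: "cross2 (g2 - g1) (w1 - g1) < 0" "cross2 (g3 - g2) (w2 - g2) < 0" "cross2 (g1 - g3) (w3 - g3) < 0"
  shows "\<exists>l. 0 < l \<and> l < 1 \<and> (\<forall>S. is_triangle S \<and> in_disk S \<and>
            congruent (convex hull {l *\<^sub>R x1, l *\<^sub>R x2, l *\<^sub>R x3}) S \<longrightarrow>
              (\<lambda>n. (psi_lift S ^^ n) 0 / real n) \<longlonglongrightarrow> 1 / 3)"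
proof -
  define \<kappa> where "\<kappa> = min (- cross2 (g2 - g1) (w1 - g1)) (min (- cross2 (g3 - g2) (w2 - g2)) (- cross2 (g1 - g3) (w3 - g3)))"
  have \<kappa>0: "\<kappa> > 0" unfolding \<kappa>_def using k by simp
  have \<kappa>k: "cross2 (g2 - g1) (w1 - g1) \<le> - \<kappa>" "cross2 (g3 - g2) (w2 - g2) \<le> - \<kappa>" "cross2 (g1 - g3) (w3 - g3) \<le> - \<kappa>"
    unfolding \<kappa>_def by auto
  define t where "t = min (\<kappa>/4) (min (\<kappa>^2/32) (1/2))"
  have t0: "0 < t" "t \<le> \<kappa>/4" "t \<le> \<kappa>^2/32" "t \<le> 1/2" unfolding t_def using \<kappa>0 by auto
  define l where "l = 1 - t"
  have l0: "0 < l" "l < 1" "1/2 \<le> l" unfolding l_def using t0 by auto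
  have nw: "norm w1 \<le> 1" "norm w2 \<le> 1" "norm w3 \<le> 1" using w nx by auto
  have main: "(\<lambda>n. (psi_lift S ^^ n) 0 / real n) \<longlonglongrightarrow> 1 / 3"
    if S: "is_triangle S" "in_disk S" "congruent (convex hull {l *\<^sub>R x1, l *\<^sub>R x2, l *\<^sub>R x3}) S" for S
  proof -
    obtain f where fi: "\<forall>x y. dist (f x) (f y) = dist x y" and fS: "f ` (convex hull {l *\<^sub>R x1, l *\<^sub>R x2, l *\<^sub>R x3}) = S"
      using S(3) unfolding congruent_def by blast
    define b where "b = f 0"
    define U where "U = (\<lambda>y. f y - b)"
    have U0: "U 0 = 0" unfolding U_def b_def by simp
    have Ui: "\<forall>x y. dist (U x) (U y) = dist x y" unfolding U_def using fi by (simp add: dist_norm)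
    have lin: "linear U" by (rule isometry_linear[OF U0 Ui])
    have nU: "\<And>y. norm (U y) = norm y" using Ui U0 by (metis dist_0_norm)
    have fe: "f = (\<lambda>y. b + y) \<circ> U" unfolding U_def by auto
    define V1 where "V1 = b + l *\<^sub>R U x1"
    define V2 where "V2 = b + l *\<^sub>R U x2"
    define V3 where "V3 = b + l *\<^sub>R U x3"
    have Seq: "S = convex hull {V1, V2, V3}"
    proof -
      have "S = (\<lambda>y. b + y) ` (U ` (convex hull {l *\<^sub>R x1, l *\<^sub>R x2, l *\<^sub>R x3}))"
        using fS unfolding fe by (simp add: image_comp)
      also have "\<dots> = (\<lambda>y. b + y) ` (convex hull (U ` {l *\<^sub>R x1, l *\<^sub>R x2, l *\<^sub>R x3}))"
        by (simp add: convex_hull_linear_image[OF lin])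
      also have "\<dots> = convex hull ((\<lambda>y. b + y) ` U ` {l *\<^sub>R x1, l *\<^sub>R x2, l *\<^sub>R x3})"
        by (rule convex_hull_translation[symmetric])
      also have "(\<lambda>y. b + y) ` U ` {l *\<^sub>R x1, l *\<^sub>R x2, l *\<^sub>R x3} = {V1, V2, V3}"
        unfolding V1_def V2_def V3_def by (simp add: linear_scale[OF lin])
      finally show ?thesis .
    qed
    have VS: "V1 \<in> S" "V2 \<in> S" "V3 \<in> S" unfolding Seq by (simp_all add: hull_inc)
    have nV: "norm V1 < 1" "norm V2 < 1" "norm V3 < 1"
      using VS S(2) unfolding in_disk_def by (auto simp: subset_iff)
    obtain \<epsilon> where eps: "\<epsilon> = 1 \<or> \<epsilon> = -1" and cr: "\<And>u v. cross2 (U u) (U v) = \<epsilon> * cross2 u v"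
      using lin_iso_cross[OF lin nU] by blast
    have bsq: "(norm b)^2 < 1 - l^2"
    proof -
      define D where "D = (\<lambda>V. inner (V - b) b)"
      have sumV: "m1 *\<^sub>R (V1 - b) + m2 *\<^sub>R (V2 - b) + m3 *\<^sub>R (V3 - b) = 0"
      proof -
        have "m1 *\<^sub>R (V1 - b) + m2 *\<^sub>R (V2 - b) + m3 *\<^sub>R (V3 - b) = l *\<^sub>R U (m1 *\<^sub>R x1 + m2 *\<^sub>R x2 + m3 *\<^sub>R x3)"
          unfolding V1_def V2_def V3_def by (simp add: linear_add[OF lin] linear_scale[OF lin] algebra_simps)
        then show ?thesis using mu(5) U0 by simp
      qed
      have sumD: "m1 * D V1 + m2 * D V2 + m3 * D V3 = 0"
      proof -
        have "m1 * D V1 + m2 * D V2 + m3 * D V3 = inner (m1 *\<^sub>R (V1 - b) + m2 *\<^sub>R (V2 - b) + m3 *\<^sub>R (V3 - b)) b"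
          unfolding D_def by (simp add: inner_add_left)
        then show ?thesis using sumV by simp
      qed
      have key: "\<exists>V x. (V = V1 \<and> x = x1 \<or> V = V2 \<and> x = x2 \<or> V = V3 \<and> x = x3) \<and> norm x = 1 \<and> D V \<ge> 0"
      proof (rule ccontr)
        assume nk: "\<not> ?thesis"
        have n1: "0 < m1 \<Longrightarrow> D V1 < 0" using nk mu(6) by (metis not_le)
        have n2: "0 < m2 \<Longrightarrow> D V2 < 0" using nk mu(7) by (metis not_le)
        have n3: "0 < m3 \<Longrightarrow> D V3 < 0" using nk mu(8) by (metis not_le)
        have a1: "m1 * D V1 \<le> 0" using n1 mu(1) by (cases "m1 = 0") (auto intro!: mult_nonneg_nonpos)
        have a2: "m2 * D V2 \<le> 0" using n2 mu(2) by (cases "m2 = 0") (auto intro!: mult_nonneg_nonpos)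
        have a3: "m3 * D V3 \<le> 0" using n3 mu(3) by (cases "m3 = 0") (auto intro!: mult_nonneg_nonpos)
        have "m1 > 0 \<or> m2 > 0 \<or> m3 > 0" using mu(1-4) by linarith
        then have "m1 * D V1 < 0 \<or> m2 * D V2 < 0 \<or> m3 * D V3 < 0"
          using n1 n2 n3 by (auto simp: mult_pos_neg)
        then show False using a1 a2 a3 sumD by linarith
      qed
      then obtain V x where Vx: "V = V1 \<and> x = x1 \<or> V = V2 \<and> x = x2 \<or> V = V3 \<and> x = x3" "norm x = 1" "D V \<ge> 0"
        by blast
      have Vdef: "V = b + l *\<^sub>R U x" and nVV: "norm V < 1" using Vx(1) nV unfolding V1_def V2_def V3_def by auto
      have "(norm V)^2 = (norm b)^2 + 2 * D V + (norm (V - b))^2"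
      proof -
        have "V = b + (V - b)" by simp
        then have "(norm V)^2 = (norm (b + (V - b)))^2" by simp
        also have "\<dots> = (norm b)^2 + 2 * inner (V - b) b + (norm (V - b))^2"
          by (simp add: power2_norm_eq_inner inner_add algebra_simps inner_commute)
        finally show ?thesis unfolding D_def .
      qed
      moreover have "norm (V - b) = l" unfolding Vdef using nU[of x] Vx(2) l0 by simp
      moreover have "(norm V)^2 < 1" using nVV by (simp add: abs_square_less_1)
      ultimately show ?thesis using Vx(3) by simp
    qed
    have bsmall: "2 * norm b + 2 * (1 - l) < \<kappa>"
    proof -
      have "1 - l^2 \<le> 2 * t" unfolding l_def using t0 by (simp add: power2_eq_square algebra_simps)
      also have "\<dots> \<le> (\<kappa>/4)^2" using t0 by (simp add: power2_eq_square)
      finally have "(norm b)^2 < (\<kappa>/4)^2" using bsq by linarith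
      then have "norm b < \<kappa>/4" using power_less_imp_less_base[of "norm b" 2 "\<kappa>/4"] \<kappa>0 by simp
      moreover have "1 - l = t" unfolding l_def by simp
      ultimately show ?thesis using t0(2) by argo
    qed
    define F where "F = psi_lift S"
    note props = lift_props[OF nV, folded Seq, folded F_def]
    have crV: "cross2 (V2 - V1) (V3 - V1) = l^2 * (\<epsilon> * cross2 (x2 - x1) (x3 - x1))"
    proof -
      have e: "V2 - V1 = l *\<^sub>R U (x2 - x1)" "V3 - V1 = l *\<^sub>R U (x3 - x1)"
        unfolding V1_def V2_def V3_def by (simp_all add: linear_diff[OF lin] algebra_simps)
      have sc: "cross2 (l *\<^sub>R p) (l *\<^sub>R q) = l^2 * cross2 p q" for p q
        by (simp add: cross2_def power2_eq_square algebra_simps)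
      show ?thesis unfolding e sc cr[of "x2 - x1" "x3 - x1"] ..
    qed
    have Lb: "\<exists>y. F (F (F y)) \<ge> y + 1"
    proof (cases "cross2 (V2 - V1) (V3 - V1) > 0")
      case True
      show ?thesis using L_any[OF nV True] unfolding F_def Seq .
    next
      case False
      have "cross2 (V2 - V1) (V3 - V1) \<noteq> 0" unfolding crV using ncol eps l0 by auto
      moreover have "cross2 (V3 - V1) (V2 - V1) = - cross2 (V2 - V1) (V3 - V1)" by (simp add: cross2_def)
      ultimately have "cross2 (V3 - V1) (V2 - V1) > 0" using False by linarith
      from L_any[OF nV(1) nV(3) nV(2) this] show ?thesis
        unfolding F_def Seq by (simp add: insert_commute)
    qed
    define W1 where "W1 = b + l *\<^sub>R U w1"
    define W2 where "W2 = b + l *\<^sub>R U w2"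
    define W3 where "W3 = b + l *\<^sub>R U w3"
    have Ww: "W1 \<in> {V1,V2,V3}" "W2 \<in> {V1,V2,V3}" "W3 \<in> {V1,V2,V3}"
      using w unfolding W1_def W2_def W3_def V1_def V2_def V3_def by auto
    have p1: "\<epsilon> * cross2 (U g2 - U g1) (W1 - U g1) < 0" unfolding W1_def
      by (rule perturb[OF lin nU eps cr g(1) g(2) nw(1) \<kappa>k(1) l0(1) _ bsmall]) (use l0 in simp)
    have p2: "\<epsilon> * cross2 (U g3 - U g2) (W2 - U g2) < 0" unfolding W2_def
      by (rule perturb[OF lin nU eps cr g(2) g(3) nw(2) \<kappa>k(2) l0(1) _ bsmall]) (use l0 in simp)
    have p3: "\<epsilon> * cross2 (U g1 - U g3) (W3 - U g3) < 0" unfolding W3_def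
      by (rule perturb[OF lin nU eps cr g(3) g(1) nw(3) \<kappa>k(3) l0(1) _ bsmall]) (use l0 in simp)
    have ng: "norm (U g1) = 1" "norm (U g2) = 1" "norm (U g3) = 1" using nU g by simp_all
    have og: "cross2 (U g2 - U g1) (U g3 - U g1) = \<epsilon> * cross2 (g2 - g1) (g3 - g1)"
      using cr[of "g2 - g1" "g3 - g1"] by (simp add: linear_diff[OF lin])
    have Ub: "\<exists>y. F (F (F y)) \<le> y + 1"
      using eps
    proof
      assume e: "\<epsilon> = 1"
      show ?thesis unfolding F_def Seq
        by (rule U_crit[OF nV ng _ Ww]) (use og e g p1 p2 p3 in simp_all)
    next
      assume e: "\<epsilon> = -1"
      have og2: "cross2 (U g3 - U g1) (U g2 - U g1) > 0"
        using og e g(4) by (simp add: cross2_def algebra_simps)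
      have q1: "cross2 (U g3 - U g1) (W3 - U g1) \<le> 0" using p3 e cross_rev[of "U g3" "U g1" W3] by simp
      have q2: "cross2 (U g2 - U g3) (W2 - U g3) \<le> 0" using p2 e cross_rev[of "U g2" "U g3" W2] by simp
      have q3: "cross2 (U g1 - U g2) (W1 - U g2) \<le> 0" using p1 e cross_rev[of "U g1" "U g2" W1] by simp
      show ?thesis unfolding F_def Seq
        by (rule U_crit[OF nV ng(1) ng(3) ng(2) og2 Ww(3) Ww(2) Ww(1) q1 q2 q3])
    qed
    obtain x0 where x0: "F (F (F x0)) \<ge> x0 + 1" using Lb by blast
    obtain y0 where y0: "F (F (F y0)) \<le> y0 + 1" using Ub by blast
    show ?thesis unfolding F_def[symmetric]
      by (rule rot_third[OF props x0 y0])
  qed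
  show ?thesis using l0 main by blast
qed

lemma cross_zero_collinear:
  assumes "cross2 (B - A) (C - A) = 0"
  shows "collinear {A, B, C}"
proof (cases "B = A")
  case True then show ?thesis by (simp add: collinear_2 insert_commute)
next
  case False
  define u where "u = B - A"
  define v where "v = C - A"
  have u0: "norm u \<noteq> 0" using False unfolding u_def by simp
  define c where "c = inner v u / (norm u)^2"
  have "v = c *\<^sub>R u"
  proof -
    have cr: "cross2 u v = 0" using assms unfolding u_def v_def .
    have nu: "(norm u)^2 = inner u u" "(norm v)^2 = inner v v" by (simp_all add: power2_norm_eq_inner)
    have "(norm (v - c *\<^sub>R u))^2 = inner v v - 2 * c * inner v u + c^2 * inner u u"
      unfolding power2_norm_eq_inner by (simp add: inner_diff_left inner_diff_right inner_commute algebra_simps power2_eq_square)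
    also have "\<dots> = inner v v - (inner v u)^2 / inner u u"
      unfolding c_def nu using u0 nu(1) by (simp add: field_simps power2_eq_square)
    also have "\<dots> = 0"
      using lagrange2[of u v] cr u0 unfolding nu by (simp add: field_simps inner_commute power2_eq_square)
    finally show ?thesis by simp
  qed
  then have vC: "C - A = c *\<^sub>R (B - A)" unfolding u_def v_def .
  show ?thesis unfolding collinear_def
  proof (intro exI[of _ "B - A"] ballI)
    fix x y assume "x \<in> {A,B,C}" "y \<in> {A,B,C}"
    have xa: "\<exists>d. x - A = d *\<^sub>R (B - A)" using \<open>x \<in> {A,B,C}\<close> vC
      by (auto intro: exI[of _ 0] exI[of _ 1] exI[of _ c])
    have ya: "\<exists>d. y - A = d *\<^sub>R (B - A)" using \<open>y \<in> {A,B,C}\<close> vC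
      by (auto intro: exI[of _ 0] exI[of _ 1] exI[of _ c])
    from xa ya obtain d1 d2 where "x - A = d1 *\<^sub>R (B - A)" "y - A = d2 *\<^sub>R (B - A)" by blast
    then have "x - y = (d1 - d2) *\<^sub>R (B - A)"
      by (metis (no_types, lifting) diff_diff_eq2 diff_add_cancel scaleR_diff_left add_diff_cancel_right')
    then show "\<exists>c. x - y = c *\<^sub>R (B - A)" by blast
  qed
qed

lemma noncollinear_cross:
  assumes "cross2 (B - A) (C - A) \<noteq> 0"
  shows "\<not> collinear {A, B, C}"
proof
  assume "collinear {A, B, C}"
  then obtain u where u: "\<forall>x\<in>{A,B,C}. \<forall>y\<in>{A,B,C}. \<exists>c. x - y = c *\<^sub>R u"
    unfolding collinear_def by blast
  obtain c1 where "B - A = c1 *\<^sub>R u" using u by blast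
  moreover obtain c2 where "C - A = c2 *\<^sub>R u" using u by blast
  ultimately have "cross2 (B - A) (C - A) = 0" by (simp add: cross2_def algebra_simps)
  with assms show False by simp
qed

lemma circ_orient:
  assumes "p < q" "q < r" "r < p + 1"
  shows "cross2 (circ q - circ p) (circ r - circ p) > 0"
proof -
  define d where "d = q - p"
  define e where "e = r - p"
  have d: "0 < d" "d < 1" and e: "0 < e" "e < 1" and de: "d < e"
    using assms unfolding d_def e_def by auto
  have n: "norm (circ (p+e)) \<le> 1" by simp
  have ne: "circ (p+e) \<noteq> circ p" by (rule circ_ne[OF e])
  have "d < gg (circ (p+e)) p" using gg_circ[OF e] de by simp
  then have "cross2 (circ (p+d) - circ p) (circ (p+e) - circ p) > 0" using gg_sign[OF n ne d] by simp
  then show ?thesis unfolding d_def e_def by simp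
qed

lemma circ_cut:
  assumes "p < y" "y < q" "q < p + 1"
  shows "cross2 (circ q - circ p) (circ y - circ p) < 0"
proof -
  define d where "d = q - p"
  define e where "e = y - p"
  have d: "0 < d" "d < 1" and e: "0 < e" "e < 1" and de: "e < d"
    using assms unfolding d_def e_def by auto
  have n: "norm (circ (p+e)) \<le> 1" by simp
  have ne: "circ (p+e) \<noteq> circ p" by (rule circ_ne[OF e])
  have "gg (circ (p+e)) p < d" using gg_circ[OF e] de by simp
  then have "cross2 (circ (p+d) - circ p) (circ (p+e) - circ p) < 0" using gg_sign[OF n ne d] by simp
  then show ?thesis unfolding d_def e_def by simp
qed

lemma sim_map:
  fixes w M :: "real^2" and p1 p2 q \<sigma> :: real
  assumes "q > 0" "\<sigma> = 1 \<or> \<sigma> = -1"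
  defines "\<Psi> \<equiv> \<lambda>y. vector [p1 + q * inner w (y - M), p2 + \<sigma> * q * cross2 w (y - M)] :: real^2"
  shows "dist (\<Psi> y) (\<Psi> y') = (q * norm w) * dist y y'"
    and "\<Psi> ` (convex hull {a,b,c}) = convex hull {\<Psi> a, \<Psi> b, \<Psi> c}"
proof -
  have ss: "\<sigma> * \<sigma> = 1" using assms(2) by auto
  have ss2: "\<sigma> * (\<sigma> * x) = x" for x using ss by (metis mult.assoc mult_1)
  have "(dist (\<Psi> y) (\<Psi> y'))^2 = q^2 * ((inner w (y - y'))^2 + (cross2 w (y - y'))^2)"
    unfolding dist_norm normsq2 \<Psi>_def
    by (simp add: inner2 cross2_def power2_eq_square algebra_simps ss2)
  also have "\<dots> = (q * norm w * dist y y')^2"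
    using lagrange2[of w "y - y'"] by (simp add: dist_norm power_mult_distrib algebra_simps)
  finally have "(dist (\<Psi> y) (\<Psi> y'))^2 = (q * norm w * dist y y')^2" .
  then show "dist (\<Psi> y) (\<Psi> y') = (q * norm w) * dist y y'"
    using assms(1) by (simp add: power2_eq_iff_nonneg)
  have aff: "\<Psi> (u *\<^sub>R a + v *\<^sub>R b + t *\<^sub>R c) = u *\<^sub>R \<Psi> a + v *\<^sub>R \<Psi> b + t *\<^sub>R \<Psi> c"
    if "u + v + t = 1" for u v t
  proof -
    have t: "t = 1 - u - v" using that by simp
    show ?thesis unfolding \<Psi>_def vec_eq2 t
      by (simp add: inner2 cross2_def algebra_simps)
  qed
  show "\<Psi> ` (convex hull {a,b,c}) = convex hull {\<Psi> a, \<Psi> b, \<Psi> c}"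
    unfolding convex_hull_3
  proof (intro set_eqI iffI)
    fix x assume "x \<in> \<Psi> ` {u *\<^sub>R a + v *\<^sub>R b + t *\<^sub>R c |u v t. 0 \<le> u \<and> 0 \<le> v \<and> 0 \<le> t \<and> u + v + t = 1}"
    then obtain u v t where "x = \<Psi> (u *\<^sub>R a + v *\<^sub>R b + t *\<^sub>R c)" "0 \<le> u" "0 \<le> v" "0 \<le> t" "u + v + t = 1"
      by blast
    then show "x \<in> {u *\<^sub>R \<Psi> a + v *\<^sub>R \<Psi> b + t *\<^sub>R \<Psi> c |u v t. 0 \<le> u \<and> 0 \<le> v \<and> 0 \<le> t \<and> u + v + t = 1}"
      using aff by blast
  next
    fix x assume "x \<in> {u *\<^sub>R \<Psi> a + v *\<^sub>R \<Psi> b + t *\<^sub>R \<Psi> c |u v t. 0 \<le> u \<and> 0 \<le> v \<and> 0 \<le> t \<and> u + v + t = 1}"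
    then obtain u v t where x: "x = u *\<^sub>R \<Psi> a + v *\<^sub>R \<Psi> b + t *\<^sub>R \<Psi> c" "0 \<le> u" "0 \<le> v" "0 \<le> t" "u + v + t = 1"
      by blast
    then have "x = \<Psi> (u *\<^sub>R a + v *\<^sub>R b + t *\<^sub>R c)" using aff by simp
    then show "x \<in> \<Psi> ` {u *\<^sub>R a + v *\<^sub>R b + t *\<^sub>R c |u v t. 0 \<le> u \<and> 0 \<le> v \<and> 0 \<le> t \<and> u + v + t = 1}"
      using x by blast
  qed
qed

definition good :: "(real^2) set \<Rightarrow> bool" where
  "good T' \<longleftrightarrow> (\<forall>S. is_triangle S \<and> in_disk S \<and> congruent T' S \<longrightarrow>
              (\<lambda>n. (psi_lift S ^^ n) 0 / real n) \<longlonglongrightarrow> 1 / 3)"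

lemma norm_vec2: "norm (vector [a, b] :: real^2) = sqrt (a^2 + b^2)"
  by (simp add: norm_eq_sqrt_inner inner2 power2_eq_square)

lemma finish:
  fixes x1 x2 x3 :: "real^2"
  assumes nx: "norm x1 \<le> 1" "norm x2 \<le> 1" "norm x3 \<le> 1"
    and ncol: "cross2 (x2 - x1) (x3 - x1) \<noteq> 0"
    and ex: "\<exists>l. 0 < l \<and> l < 1 \<and> good (convex hull {l *\<^sub>R x1, l *\<^sub>R x2, l *\<^sub>R x3})"
    and \<Psi>: "\<And>y y'. dist (\<Psi> y) (\<Psi> y') = K * dist y y'" "K > 0"
      "\<Psi> ` (convex hull {A,B,C}) = convex hull {x1,x2,x3}"
  shows "\<exists>T'. is_triangle T' \<and> in_disk T' \<and> similar (convex hull {A,B,C}) T' \<and> good T'"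
proof -
  obtain l where l: "0 < l" "l < 1" "good (convex hull {l *\<^sub>R x1, l *\<^sub>R x2, l *\<^sub>R x3})" using ex by blast
  define T' where "T' = convex hull {l *\<^sub>R x1, l *\<^sub>R x2, l *\<^sub>R x3}"
  have tri: "is_triangle T'"
  proof -
    have "cross2 (l *\<^sub>R x2 - l *\<^sub>R x1) (l *\<^sub>R x3 - l *\<^sub>R x1) = l^2 * cross2 (x2 - x1) (x3 - x1)"
      by (simp add: cross2_def power2_eq_square algebra_simps)
    then have "cross2 (l *\<^sub>R x2 - l *\<^sub>R x1) (l *\<^sub>R x3 - l *\<^sub>R x1) \<noteq> 0" using ncol l by simp
    then show ?thesis unfolding is_triangle_def T'_def using noncollinear_cross by blast
  qed
  have disk: "in_disk T'"
  proof -
    have "{l *\<^sub>R x1, l *\<^sub>R x2, l *\<^sub>R x3} \<subseteq> ball 0 1"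
      using nx l by (auto simp: mult_le_one) (smt (verit) mult_left_le)+
    then show ?thesis unfolding in_disk_def T'_def by (simp add: hull_minimal)
  qed
  have sim: "similar (convex hull {A,B,C}) T'"
    unfolding similar_def
  proof (intro exI conjI allI)
    show "0 < l * K" using l \<Psi> by simp
    show "dist (l *\<^sub>R \<Psi> x) (l *\<^sub>R \<Psi> y) = (l * K) * dist x y" for x y
      using \<Psi>(1)[of x y] l by (simp add: dist_norm scaleR_diff_right[symmetric])
    have "(\<lambda>y. l *\<^sub>R \<Psi> y) ` (convex hull {A,B,C}) = scaleR l ` (\<Psi> ` (convex hull {A,B,C}))"
      by (simp add: image_comp o_def)
    also have "\<dots> = convex hull ((\<lambda>x. l *\<^sub>R x) ` {x1,x2,x3})" unfolding \<Psi>(3) by (rule convex_hull_scaling[symmetric])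
    also have "\<dots> = T'" unfolding T'_def by simp
    finally show "(\<lambda>y. l *\<^sub>R \<Psi> y) ` (convex hull {A,B,C}) = T'" .
  qed
  show ?thesis using tri disk sim l(3) unfolding T'_def by blast
qed

lemma nonacute_good:
  assumes h: "h > 0" and sh: "s^2 + h^2 \<le> 1"
  shows "norm (vector [1,0]::real^2) \<le> 1 \<and> norm (vector [-1,0]::real^2) \<le> 1 \<and> norm (vector [s,h]::real^2) \<le> 1 \<and>
    cross2 (vector [-1,0] - vector [1,0]) (vector [s,h] - vector [1,0]) \<noteq> 0 \<and>
    (\<exists>l. 0 < l \<and> l < 1 \<and> good (convex hull {l *\<^sub>R (vector [1,0]::real^2), l *\<^sub>R vector [-1,0], l *\<^sub>R vector [s,h]}))"
proof -
  define x1 :: "real^2" where "x1 = vector [1,0]"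
  define x2 :: "real^2" where "x2 = vector [-1,0]"
  define x3 :: "real^2" where "x3 = vector [s,h]"
  have "h^2 \<le> 1^2" using sh zero_le_power2[of s] by (simp only: one_power2)
  then have h1: "h \<le> 1" using power2_le_imp_le[of h 1] by simp
  define c where "c = sqrt (1 - h^2/4)"
  have "h^2 \<le> 1" using power_le_one[of h 2] h1 h by simp
  then have hq: "h^2/4 < 1" by simp
  have c0: "0 < c" unfolding c_def using hq by simp
  have c1: "c \<le> 1" unfolding c_def using h by simp
  have cc: "c^2 = 1 - h^2/4" unfolding c_def using hq by simp
  have ch: "0 < c * h" using c0 h by simp
  have ch1: "0 \<le> (1 - c) * h" using c1 h by simp
  define g1 :: "real^2" where "g1 = vector [c, h/2]"
  define g2 :: "real^2" where "g2 = vector [-c, h/2]"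
  define g3 :: "real^2" where "g3 = vector [0, -1]"
  have nx: "norm x1 \<le> 1" "norm x2 \<le> 1" "norm x3 \<le> 1"
    unfolding x1_def x2_def x3_def norm_vec2 using sh by (simp_all add: real_sqrt_le_1_iff)
  have ncol: "cross2 (x2 - x1) (x3 - x1) \<noteq> 0" unfolding x1_def x2_def x3_def cross2_def using h by simp
  have "\<exists>l. 0 < l \<and> l < 1 \<and> (\<forall>S. is_triangle S \<and> in_disk S \<and>
            congruent (convex hull {l *\<^sub>R x1, l *\<^sub>R x2, l *\<^sub>R x3}) S \<longrightarrow>
              (\<lambda>n. (psi_lift S ^^ n) 0 / real n) \<longlonglongrightarrow> 1 / 3)"
  proof (rule ref_result[of x1 x2 x3 "1/2" "1/2" 0 g1 g2 g3 x3 x2 x1])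
    show "norm x1 \<le> 1" "norm x2 \<le> 1" "norm x3 \<le> 1" by (fact nx)+
    show "cross2 (x2 - x1) (x3 - x1) \<noteq> 0" by (rule ncol)
    show "(1/2) *\<^sub>R x1 + (1/2) *\<^sub>R x2 + 0 *\<^sub>R x3 = 0" unfolding x1_def x2_def by (simp add: vec_eq2)
    show "0 < (1/2::real) \<Longrightarrow> norm x1 = 1" "0 < (1/2::real) \<Longrightarrow> norm x2 = 1"
      unfolding x1_def x2_def norm_vec2 by simp_all
    show "0 < (0::real) \<Longrightarrow> norm x3 = 1" by simp
    show "norm g1 = 1" "norm g2 = 1" "norm g3 = 1" unfolding g1_def g2_def g3_def norm_vec2
      by (simp_all add: cc power_divide)
    show "cross2 (g2 - g1) (g3 - g1) > 0" unfolding g1_def g2_def g3_def cross2_def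
      using c0 ch by (simp add: algebra_simps)
    show "cross2 (g2 - g1) (x3 - g1) < 0" unfolding g1_def g2_def x3_def cross2_def
      using c0 h by (simp add: algebra_simps)
    have "cross2 (g3 - g2) (x2 - g2) = c - 1 - h/2" unfolding g3_def g2_def x2_def cross2_def
      by (simp add: field_simps)
    then show "cross2 (g3 - g2) (x2 - g2) < 0" using c1 h by simp
    have "cross2 (g1 - g3) (x1 - g3) = c - 1 - h/2" unfolding g1_def g3_def x1_def cross2_def
      by (simp add: field_simps)
    then show "cross2 (g1 - g3) (x1 - g3) < 0" using c1 h by simp
  qed simp_all
  then show ?thesis using nx ncol unfolding good_def x1_def x2_def x3_def by blast
qed

lemma acute_good:
  assumes h: "h > 0" and s1: "\<bar>s\<bar> < 1" and sh: "s^2 + h^2 > 1"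
  defines "k \<equiv> (s^2 + h^2 - 1) / (2*h)"
  defines "\<rho> \<equiv> sqrt (1 + k^2)"
  shows "norm (vector [1/\<rho>, -k/\<rho>]::real^2) \<le> 1 \<and> norm (vector [-1/\<rho>, -k/\<rho>]::real^2) \<le> 1 \<and>
    norm (vector [s/\<rho>, (h-k)/\<rho>]::real^2) \<le> 1 \<and>
    cross2 (vector [-1/\<rho>, -k/\<rho>] - vector [1/\<rho>, -k/\<rho>]) (vector [s/\<rho>, (h-k)/\<rho>] - vector [1/\<rho>, -k/\<rho>]) \<noteq> 0 \<and>
    (\<exists>l. 0 < l \<and> l < 1 \<and> good (convex hull {l *\<^sub>R (vector [1/\<rho>, -k/\<rho>]::real^2),
            l *\<^sub>R vector [-1/\<rho>, -k/\<rho>], l *\<^sub>R vector [s/\<rho>, (h-k)/\<rho>]}))"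
proof -
  define x1 :: "real^2" where "x1 = vector [1/\<rho>, -k/\<rho>]"
  define x2 :: "real^2" where "x2 = vector [-1/\<rho>, -k/\<rho>]"
  define x3 :: "real^2" where "x3 = vector [s/\<rho>, (h-k)/\<rho>]"
  have k0: "k > 0" unfolding k_def using h sh by simp
  have hk: "2*h*k = s^2 + h^2 - 1" unfolding k_def using h by simp
  have r0: "\<rho> > 0" unfolding \<rho>_def by (simp add: add_pos_nonneg)
  have rr: "\<rho>^2 = 1 + k^2" unfolding \<rho>_def by (simp add: add_pos_nonneg)
  have kk: "1 + k^2 \<noteq> 0" by (metis add_pos_nonneg zero_le_power2 zero_less_one less_irrefl)
  have e3: "s^2 + (h-k)^2 = 1 + k^2" using hk by (simp add: power2_eq_square algebra_simps)
  have n1: "norm x1 = 1"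
  proof -
    have "(1/\<rho>)^2 + (-k/\<rho>)^2 = (1 + k^2) / \<rho>^2" by (simp add: power_divide add_divide_distrib)
    then show ?thesis unfolding x1_def norm_vec2 using r0 rr kk by simp
  qed
  have n2: "norm x2 = 1"
  proof -
    have "(-1/\<rho>)^2 + (-k/\<rho>)^2 = (1 + k^2) / \<rho>^2" by (simp add: power_divide add_divide_distrib)
    then show ?thesis unfolding x2_def norm_vec2 using r0 rr kk by simp
  qed
  have n3: "norm x3 = 1"
  proof -
    have "(s/\<rho>)^2 + ((h-k)/\<rho>)^2 = (s^2 + (h-k)^2) / \<rho>^2" by (simp add: power_divide add_divide_distrib)
    then show ?thesis unfolding x3_def norm_vec2 e3 rr using r0 rr kk by simp
  qed
  define m3 where "m3 = k / h"
  define m1 where "m1 = (1 - m3 * (1 + s)) / 2"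
  define m2 where "m2 = (1 - m3 * (1 - s)) / 2"
  have m3h: "m3 * h = k" unfolding m3_def using h by simp
  have m0: "0 \<le> m3" unfolding m3_def using k0 h by simp
  have m1p: "0 \<le> m1"
  proof -
    have i: "(s^2 + h^2 - 1) * (1 + s) - 2 * h^2 = (s - 1) * ((1+s)^2 + h^2)"
      by (simp add: power2_eq_square algebra_simps)
    have np: "(s - 1) * ((1+s)^2 + h^2) \<le> 0" using s1 by (intro mult_nonpos_nonneg) auto
    have "(s^2 + h^2 - 1) * (1 + s) \<le> 2 * h^2" using i np by linarith
    then have "(2*h*k) * (1 + s) \<le> 2 * h * h" unfolding hk by (simp add: power2_eq_square)
    then have "k * (1 + s) \<le> h" using h by (simp add: mult.assoc)
    then have "m3 * (1 + s) \<le> 1" unfolding m3_def using h by (simp add: field_simps)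
    then show ?thesis unfolding m1_def by simp
  qed
  have m2p: "0 \<le> m2"
  proof -
    have i: "(s^2 + h^2 - 1) * (1 - s) - 2 * h^2 = (-1 - s) * ((1-s)^2 + h^2)"
      by (simp add: power2_eq_square algebra_simps)
    have np: "(-1 - s) * ((1-s)^2 + h^2) \<le> 0" using s1 by (intro mult_nonpos_nonneg) auto
    have "(s^2 + h^2 - 1) * (1 - s) \<le> 2 * h^2" using i np by linarith
    then have "(2*h*k) * (1 - s) \<le> 2 * h * h" unfolding hk by (simp add: power2_eq_square)
    then have "k * (1 - s) \<le> h" using h by (simp add: mult.assoc)
    then have "m3 * (1 - s) \<le> 1" unfolding m3_def using h by (simp add: field_simps)
    then show ?thesis unfolding m2_def by simp
  qed
  have msum: "m1 + m2 + m3 = 1" unfolding m1_def m2_def by (simp add: field_simps)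
  have mvec: "m1 *\<^sub>R x1 + m2 *\<^sub>R x2 + m3 *\<^sub>R x3 = 0"
  proof -
    have a: "m1 - m2 + m3 * s = 0" unfolding m1_def m2_def by (simp add: field_simps)
    have "- (m1 + m2) * k + m3 * (h - k) = - k * (m1 + m2 + m3) + m3 * h" by (simp add: algebra_simps)
    then have b: "- (m1 + m2) * k + m3 * (h - k) = 0" using msum m3h by simp
    have "m1 * (1/\<rho>) + m2 * (-1/\<rho>) + m3 * (s/\<rho>) = (m1 - m2 + m3 * s) / \<rho>" using r0 by (simp add: field_simps)
    moreover have "m1 * (-k/\<rho>) + m2 * (-k/\<rho>) + m3 * ((h-k)/\<rho>) = (- (m1 + m2) * k + m3 * (h - k)) / \<rho>"
      using r0 by (simp add: field_simps)
    ultimately show ?thesis unfolding x1_def x2_def x3_def vec_eq2 using a b by simp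
  qed
  have or13: "cross2 (x3 - x1) (x2 - x1) > 0"
  proof -
    have "cross2 (x3 - x1) (x2 - x1) = 2 * h / \<rho>^2" unfolding x1_def x2_def x3_def cross2_def
      using r0 by (simp add: field_simps power2_eq_square)
    then show ?thesis using h r0 by simp
  qed
  have ncol: "cross2 (x2 - x1) (x3 - x1) \<noteq> 0"
    using or13 by (simp add: cross2_def algebra_simps)
  obtain a b c where abc: "a < b" "b < c" "c < a + 1" "circ a = x1" "circ b = x3" "circ c = x2"
    using circ_params[OF n1 n3 n2 or13] by blast
  define \<theta> where "\<theta> = min (b - a) (min (c - b) (a + 1 - c)) / 2"
  have th: "0 < \<theta>" "\<theta> < b - a" "\<theta> < c - b" "\<theta> < a + 1 - c" unfolding \<theta>_def using abc by auto
  define g1 where "g1 = circ (a + \<theta>)"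
  define g2 where "g2 = circ (b + \<theta>)"
  define g3 where "g3 = circ (c + \<theta>)"
  have g1': "g1 = circ ((a + 1) + \<theta>)" unfolding g1_def using circ_periodic[of "a + \<theta>"] by (simp add: algebra_simps)
  have x1': "x1 = circ (a + 1)" using circ_periodic[of a] abc(4) by simp
  have "\<exists>l. 0 < l \<and> l < 1 \<and> (\<forall>S. is_triangle S \<and> in_disk S \<and>
            congruent (convex hull {l *\<^sub>R x1, l *\<^sub>R x2, l *\<^sub>R x3}) S \<longrightarrow>
              (\<lambda>n. (psi_lift S ^^ n) 0 / real n) \<longlonglongrightarrow> 1 / 3)"
  proof (rule ref_result[of x1 x2 x3 m1 m2 m3 g1 g2 g3 x3 x2 x1])
    show "norm x1 \<le> 1" "norm x2 \<le> 1" "norm x3 \<le> 1" using n1 n2 n3 by simp_all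
    show "cross2 (x2 - x1) (x3 - x1) \<noteq> 0" by (rule ncol)
    show "0 \<le> m1" "0 \<le> m2" "0 \<le> m3" "m1 + m2 + m3 = 1" by (fact m1p m2p m0 msum)+
    show "m1 *\<^sub>R x1 + m2 *\<^sub>R x2 + m3 *\<^sub>R x3 = 0" by (rule mvec)
    show "0 < m1 \<Longrightarrow> norm x1 = 1" "0 < m2 \<Longrightarrow> norm x2 = 1" "0 < m3 \<Longrightarrow> norm x3 = 1"
      using n1 n2 n3 by simp_all
    show "norm g1 = 1" "norm g2 = 1" "norm g3 = 1" unfolding g1_def g2_def g3_def by simp_all
    show "cross2 (g2 - g1) (g3 - g1) > 0" unfolding g1_def g2_def g3_def
      by (rule circ_orient) (use abc th in auto)
    show "cross2 (g2 - g1) (x3 - g1) < 0" unfolding g1_def g2_def abc(5)[symmetric]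
      by (rule circ_cut) (use abc th in auto)
    show "cross2 (g3 - g2) (x2 - g2) < 0" unfolding g3_def g2_def abc(6)[symmetric]
      by (rule circ_cut) (use abc th in auto)
    show "cross2 (g1 - g3) (x1 - g3) < 0" unfolding g1' g3_def x1'
      by (rule circ_cut) (use abc th in auto)
  qed simp_all
  then show ?thesis using n1 n2 n3 ncol unfolding good_def x1_def x2_def x3_def by simp
qed

lemma shape_main:
  assumes ncol: "\<not> collinear {A, B, C}"
    and long: "dist A C \<le> dist A B" "dist B C \<le> dist A B"
  shows "\<exists>T'. is_triangle T' \<and> in_disk T' \<and> similar (convex hull {A,B,C}) T' \<and> good T'"
proof -
  define M where "M = (1/2) *\<^sub>R (A + B)"
  define w where "w = (1/2) *\<^sub>R (A - B)"
  have cr: "cross2 w (C - M) = - (1/2) * cross2 (B - A) (C - A)"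
    unfolding w_def M_def by (simp add: cross2_def algebra_simps)
  have cne: "cross2 (B - A) (C - A) \<noteq> 0" using ncol cross_zero_collinear by blast
  have cr0: "cross2 w (C - M) \<noteq> 0" using cr cne by simp
  have AB: "A \<noteq> B" using ncol by (auto simp: collinear_2 insert_commute)
  have nw: "norm w > 0" unfolding w_def using AB by simp
  define \<sigma> :: real where "\<sigma> = (if cross2 w (C - M) > 0 then 1 else -1)"
  have sig: "\<sigma> = 1 \<or> \<sigma> = -1" unfolding \<sigma>_def by simp
  define q where "q = 1 / (norm w)^2"
  have q0: "q > 0" unfolding q_def using nw by simp
  have ww: "inner w w = (norm w)^2" by (simp add: power2_norm_eq_inner)
  define s where "s = q * inner w (C - M)"
  define h where "h = \<sigma> * q * cross2 w (C - M)"
  have h0: "h > 0" unfolding h_def \<sigma>_def using q0 cr0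
    by (auto simp: zero_less_mult_iff mult_less_0_iff)
  define \<Phi> where "\<Phi> = (\<lambda>y. vector [0 + q * inner w (y - M), 0 + \<sigma> * q * cross2 w (y - M)] :: real^2)"
  have AM: "A - M = w" unfolding w_def M_def by (simp add: vec_eq2 algebra_simps)
  have BM: "B - M = - w" unfolding w_def M_def by (simp add: vec_eq2 algebra_simps)
  have cww: "cross2 w w = 0" by (simp add: cross2_def)
  have PA: "\<Phi> A = vector [1, 0]" unfolding \<Phi>_def AM q_def ww cww using nw by simp
  have PB: "\<Phi> B = vector [-1, 0]" unfolding \<Phi>_def BM q_def using nw cww
    by (simp add: ww cross2_def)
  have PC: "\<Phi> C = vector [s, h]" unfolding \<Phi>_def s_def h_def by simp
  have dP: "dist (\<Phi> y) (\<Phi> y') = (q * norm w) * dist y y'" for y y'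
    unfolding \<Phi>_def by (rule sim_map(1)[OF q0 sig])
  have iP: "\<Phi> ` (convex hull {A,B,C}) = convex hull {\<Phi> A, \<Phi> B, \<Phi> C}"
    unfolding \<Phi>_def by (rule sim_map(2)[OF q0 sig])
  have qw: "q * norm w * dist A B = 2"
  proof -
    have "dist A B = 2 * norm w" unfolding w_def dist_norm by simp
    then show ?thesis unfolding q_def using nw by (simp add: power2_eq_square)
  qed
  have dAC: "dist (\<Phi> A) (\<Phi> C) \<le> 2"
    unfolding dP using long(1) qw q0 nw by (metis mult_left_mono mult_nonneg_nonneg less_eq_real_def norm_ge_zero)
  have dBC: "dist (\<Phi> B) (\<Phi> C) \<le> 2"
    unfolding dP using long(2) qw q0 nw by (metis mult_left_mono mult_nonneg_nonneg less_eq_real_def norm_ge_zero)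
  have s1: "\<bar>s\<bar> < 1"
  proof -
    have "(dist (\<Phi> A) (\<Phi> C))^2 = (1 - s)^2 + h^2" unfolding PA PC dist_norm normsq2 by (simp add: power2_commute)
    moreover have "(dist (\<Phi> A) (\<Phi> C))^2 \<le> 4" using power_mono[OF dAC zero_le_dist, of 2] by simp
    moreover have "h^2 > 0" using h0 by simp
    ultimately have "(1 - s)^2 < 4" by linarith
    then have a: "(1 - s)^2 < 2^2" by simp
    have "(dist (\<Phi> B) (\<Phi> C))^2 = (s + 1)^2 + h^2" unfolding PB PC dist_norm normsq2 by (simp add: power2_commute)
    moreover have "(dist (\<Phi> B) (\<Phi> C))^2 \<le> 4" using power_mono[OF dBC zero_le_dist, of 2] by simp
    moreover have "h^2 > 0" using h0 by simp
    ultimately have "(s + 1)^2 < 4" by linarith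
    then have b: "(s + 1)^2 < 2^2" by simp
    have "1 - s < 2" using power_less_imp_less_base[OF a] by simp
    moreover have "s + 1 < 2" using power_less_imp_less_base[OF b] by simp
    ultimately show ?thesis by linarith
  qed
  show ?thesis
  proof (cases "s^2 + h^2 \<le> 1")
    case True
    note ng = nonacute_good[OF h0 True]
    show ?thesis
      by (rule finish[of "vector [1,0]" "vector [-1,0]" "vector [s,h]" \<Phi> "q * norm w"])
         (use ng dP q0 nw iP PA PB PC in auto)
  next
    case False
    then have sh: "s^2 + h^2 > 1" by simp
    define k where "k = (s^2 + h^2 - 1) / (2*h)"
    define \<rho> where "\<rho> = sqrt (1 + k^2)"
    have r0: "\<rho> > 0" unfolding \<rho>_def by (simp add: add_pos_nonneg)
    note ag = acute_good[OF h0 s1 sh, folded k_def, folded \<rho>_def]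
    define \<Psi> where "\<Psi> = (\<lambda>y. vector [0 + (q/\<rho>) * inner w (y - M), (-k/\<rho>) + \<sigma> * (q/\<rho>) * cross2 w (y - M)] :: real^2)"
    have dS: "dist (\<Psi> y) (\<Psi> y') = ((q/\<rho>) * norm w) * dist y y'" for y y'
      unfolding \<Psi>_def by (rule sim_map(1)) (use q0 r0 sig in auto)
    have iS: "\<Psi> ` (convex hull {A,B,C}) = convex hull {\<Psi> A, \<Psi> B, \<Psi> C}"
      unfolding \<Psi>_def by (rule sim_map(2)) (use q0 r0 sig in auto)
    have SA: "\<Psi> A = vector [1/\<rho>, -k/\<rho>]" unfolding \<Psi>_def AM q_def ww cww using nw by simp
    have SB: "\<Psi> B = vector [-1/\<rho>, -k/\<rho>]" unfolding \<Psi>_def BM q_def using nw cww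
      by (simp add: ww cross2_def)
    have SC: "\<Psi> C = vector [s/\<rho>, (h-k)/\<rho>]" unfolding \<Psi>_def s_def h_def vec_eq2
      by (simp add: diff_divide_distrib)
    show ?thesis
      by (rule finish[of "vector [1/\<rho>, -k/\<rho>]" "vector [-1/\<rho>, -k/\<rho>]" "vector [s/\<rho>, (h-k)/\<rho>]" \<Psi> "(q/\<rho>) * norm w"])
         (use ag dS q0 r0 nw iS SA SB SC in auto)
  qed
qed

theorem theorem5p1:
  assumes "is_triangle T" and "in_disk T"
  shows "\<exists>T'. is_triangle T' \<and> in_disk T' \<and> similar T T' \<and>
           (\<forall>S. is_triangle S \<and> in_disk S \<and> congruent T' S \<longrightarrow>
              (\<lambda>n. (psi_lift S ^^ n) 0 / real n) \<longlonglongrightarrow> 1 / 3)"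
proof -
  obtain A B C where nc: "\<not> collinear {A, B, C}" and T: "T = convex hull {A, B, C}"
    using assms(1) unfolding is_triangle_def by blast
  have "\<exists>T'. is_triangle T' \<and> in_disk T' \<and> similar (convex hull {A,B,C}) T' \<and> good T'"
  proof (cases "dist A C \<le> dist A B \<and> dist B C \<le> dist A B")
    case True
    then show ?thesis using shape_main[OF nc] by blast
  next
    case F1: False
    show ?thesis
    proof (cases "dist A B \<le> dist A C \<and> dist C B \<le> dist A C")
      case True
      have nc': "\<not> collinear {A, C, B}" using nc by (simp add: insert_commute)
      have "{A, C, B} = {A, B, C}" by auto
      then show ?thesis using shape_main[OF nc'] True by metis
    next
      case False
      have l: "dist B A \<le> dist B C" "dist C A \<le> dist B C"
        using F1 False by (auto simp: dist_commute)
      have nc': "\<not> collinear {B, C, A}" using nc by (simp add: insert_commute)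
      have "{B, C, A} = {A, B, C}" by auto
      then show ?thesis using shape_main[OF nc' l] by metis
    qed
  qed
  then show ?thesis unfolding T good_def .
qed

end
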